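(* Let $b$ satisfy (b1)–(b4), $u\in BV(\Omega)\cap L^\infty(\Omega)$ and $\lambda\colon\Omega\to[0,1]$ Borel. Then for every $\varphi\in C^1_c(\Omega)$, $$\int_\Omega\varphi\,d[b(\cdot,u),Du]_\lambda=\int_{\mathbb R}\Big(\int_\Omega\varphi\,d(b_t,D\chi_{\{u>t\}})_\lambda\Big)dt .$$
   Context: $\Omega\subseteq\mathbb R^N$ ($N\ge2$) open; $\mathcal{DM}^\infty(\Omega)$ = fields $A\in L^\infty(\Omega;\mathbb R^N)$ with distributional divergence a finite Radon measure. Assumptions on $b\colon\Omega\times\mathbb R\to\mathbb R^N$: (b1) Borel and bounded; (b2) for a.e. $x$, $t\mapsto b(x,t)$ continuous; (b3) $b_t:=b(\cdot,t)\in\mathcal{DM}^\infty(\Omega)$ for all $t$; (b4) $\sigma:=\bigvee_t|\operatorname{div}_xb_t|$ (least upper bound of measures) is a finite Radon measure. $f(\cdot,t)=d\operatorname{div}_xb_t/d\sigma$, $B(x,t)=\int_0^tb(x,s)ds$, $F(x,t)=\int_0^tf(x,s)ds$. $u^\pm$ approximate upper/lower limits, $v^\lambda:=(1-\lambda)v^-+\lambda v^+$ for $v\in BV$. External nonlinear pairing: $[b(\cdot,u),Du]_\lambda:=-((1-\lambda)F(x,u^-)+\lambda F(x,u^+))\sigma+\operatorname{div}(B(x,u(x)))$. Linear $\lambda$-pairing for $A\in\mathcal{DM}^\infty(\Omega)$ and $v\in BV(\Omega)\cap L^\infty(\Omega)$: $(A,Dv)_\lambda:=\operatorname{div}(vA)-v^\lambda\operatorname{div}A$.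 For $\mathcal L^1$-a.e. $t$, $\chi_{\{u>t\}}\in BV(\Omega)$. *)

theory Defs
  imports "HOL-Analysis.Analysis"
begin

definition grad :: "('a::euclidean_space \<Rightarrow> real) \<Rightarrow> 'a \<Rightarrow> 'a" where
  "grad \<phi> x = (\<Sum>i\<in>Basis. frechet_derivative \<phi> (at x) i *\<^sub>R i)"

definition divergence :: "('a::euclidean_space \<Rightarrow> 'a) \<Rightarrow> 'a \<Rightarrow> real" where
  "divergence \<phi> x = (\<Sum>i\<in>Basis. frechet_derivative (\<lambda>y. \<phi> y \<bullet> i) (at x) i)"

definition C1c :: "'a::euclidean_space set \<Rightarrow> ('a \<Rightarrow> real) \<Rightarrow> bool" where
  "C1c \<Omega> \<phi> \<longleftrightarrow> (\<forall>x. \<phi> differentiable (at x)) \<and> continuous_on UNIV (grad \<phi>) \<and>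
     (\<exists>K. compact K \<and> K \<subseteq> \<Omega> \<and> (\<forall>x. x \<notin> K \<longrightarrow> \<phi> x = 0))"

definition C1c_field :: "'a::euclidean_space set \<Rightarrow> ('a \<Rightarrow> 'a) \<Rightarrow> bool" where
  "C1c_field \<Omega> \<phi> \<longleftrightarrow> (\<forall>i\<in>Basis. C1c \<Omega> (\<lambda>x. \<phi> x \<bullet> i))"

definition BV :: "'a::euclidean_space set \<Rightarrow> ('a \<Rightarrow> real) \<Rightarrow> bool" where
  "BV \<Omega> u \<longleftrightarrow> set_integrable lebesgue \<Omega> u \<and>
     (\<exists>C. \<forall>\<phi>. C1c_field \<Omega> \<phi> \<and> (\<forall>x. norm (\<phi> x) \<le> 1) \<longrightarrow>
          (LINT x:\<Omega>|lebesgue. u x * divergence \<phi> x) \<le> C)"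

text \<open>L-infinity(Omega) (measurability comes with BV).\<close>
definition Linf :: "'a::euclidean_space set \<Rightarrow> ('a \<Rightarrow> real) \<Rightarrow> bool" where
  "Linf \<Omega> u \<longleftrightarrow> (\<exists>M. AE x in lebesgue. x \<in> \<Omega> \<longrightarrow> \<bar>u x\<bar> \<le> M)"

definition approx_upper :: "'a::euclidean_space set \<Rightarrow> ('a \<Rightarrow> real) \<Rightarrow> 'a \<Rightarrow> real" where
  "approx_upper \<Omega> u x = Inf {t. ((\<lambda>r. measure lebesgue (ball x r \<inter> {y\<in>\<Omega>. t < u y}) /
                                    measure lebesgue (ball x r)) \<longlongrightarrow> 0) (at_right 0)}"

definition approx_lower :: "'a::euclidean_space set \<Rightarrow> ('a \<Rightarrow> real) \<Rightarrow> 'a \<Rightarrow> real" where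
  "approx_lower \<Omega> u x = Sup {t. ((\<lambda>r. measure lebesgue (ball x r \<inter> {y\<in>\<Omega>. u y < t}) /
                                    measure lebesgue (ball x r)) \<longlongrightarrow> 0) (at_right 0)}"

definition lam_rep :: "'a::euclidean_space set \<Rightarrow> ('a \<Rightarrow> real) \<Rightarrow> ('a \<Rightarrow> real) \<Rightarrow> 'a \<Rightarrow> real" where
  "lam_rep \<Omega> lam v x = (1 - lam x) * approx_lower \<Omega> v x + lam x * approx_upper \<Omega> v x"

text \<open>Integral of phi against the linear lambda-pairing (A, Dv)_lambda = div(vA) - v^lambda div A,
  where div A = g sigma (g the density of div A w.r.t. sigma); the term int phi d div(vA)
  is written distributionally as - int (v A) . grad phi dx.\<close>
definition lin_pairing_int ::
  "'a::euclidean_space set \<Rightarrow> 'a measure \<Rightarrow> ('a \<Rightarrow> 'a) \<Rightarrow> ('a \<Rightarrow> real) \<Rightarrow> ('a \<Rightarrow> real)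
    \<Rightarrow> ('a \<Rightarrow> real) \<Rightarrow> ('a \<Rightarrow> real) \<Rightarrow> real" where
  "lin_pairing_int \<Omega> \<sigma> A g v lam \<phi> =
     - (LINT x:\<Omega>|lebesgue. (v x *\<^sub>R A x) \<bullet> grad \<phi> x)
     - (\<integral>x. \<phi> x * lam_rep \<Omega> lam v x * g x \<partial>\<sigma>)"

definition Fint :: "('a \<Rightarrow> real \<Rightarrow> real) \<Rightarrow> 'a \<Rightarrow> real \<Rightarrow> real" where
  "Fint f x t = interval_lebesgue_integral lborel (ereal 0) (ereal t) (f x)"

definition Bint :: "('a \<Rightarrow> real \<Rightarrow> 'a::euclidean_space) \<Rightarrow> 'a \<Rightarrow> real \<Rightarrow> 'a" where
  "Bint b x t = interval_lebesgue_integral lborel (ereal 0) (ereal t) (b x)"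

text \<open>Integral of phi against the nonlinear pairing
  [b(.,u),Du]_lambda = -((1-lambda)F(x,u^-) + lambda F(x,u^+)) sigma + div(B(x,u(x))).\<close>
definition nonlin_pairing_int ::
  "'a::euclidean_space set \<Rightarrow> 'a measure \<Rightarrow> ('a \<Rightarrow> real \<Rightarrow> 'a) \<Rightarrow> ('a \<Rightarrow> real \<Rightarrow> real)
    \<Rightarrow> ('a \<Rightarrow> real) \<Rightarrow> ('a \<Rightarrow> real) \<Rightarrow> ('a \<Rightarrow> real) \<Rightarrow> real" where
  "nonlin_pairing_int \<Omega> \<sigma> b f u lam \<phi> =
     - (\<integral>x. \<phi> x * ((1 - lam x) * Fint f x (approx_lower \<Omega> u x)
                     + lam x * Fint f x (approx_upper \<Omega> u x)) \<partial>\<sigma>)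
     - (LINT x:\<Omega>|lebesgue. Bint b x (u x) \<bullet> grad \<phi> x)"

end

theory Submission
  imports Defs "HOL-Analysis.Analysis"
begin


definition Vb :: "'a::euclidean_space itself \<Rightarrow> real \<Rightarrow> real" where
  "Vb _ r = measure lebesgue (ball (0::'a) r)"

lemma measure_ball_eq:
  fixes x :: "'a::euclidean_space"
  assumes "r \<ge> 0"
  shows "measure lebesgue (ball x r) = r ^ DIM('a) * measure lebesgue (ball (0::'a) 1)"
proof -
  have "emeasure lebesgue (ball x r) = ennreal (r ^ DIM('a)) * emeasure lebesgue (ball (0 :: 'a) 1)"
    using assms by (rule emeasure_lebesgue_ball_conv_unit_ball)
  also have "\<dots> = ennreal (r ^ DIM('a) * measure lebesgue (ball (0::'a) 1))"
    using emeasure_lborel_ball_finite[of "0::'a" 1] assms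
    by (subst emeasure_eq_ennreal_measure) (auto simp: ennreal_mult')
  finally show ?thesis
    using assms by (simp add: measure_def)
qed

lemma unit_ball_pos: "measure lebesgue (ball (0::'a::euclidean_space) 1) > 0"
  by simp

lemma measure_ball_pos:
  fixes x :: "'a::euclidean_space"
  assumes "r > 0" shows "measure lebesgue (ball x r) > 0"
  using measure_ball_eq[of r x] assms unit_ball_pos[where 'a='a] by simp

lemma ball_fmeas: "ball (x::'a::euclidean_space) r \<in> fmeasurable lebesgue"
  using emeasure_lborel_ball_finite[of x r] by (auto simp: fmeasurable_def)

lemma mball_diff:
  fixes x :: "'a::euclidean_space"
  assumes E: "E \<in> sets lebesgue" and r: "0 \<le> r" "r \<le> R"
  shows "measure lebesgue (ball x R \<inter> E) \<le> measure lebesgue (ball x r \<inter> E)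
          + (R ^ DIM('a) - r ^ DIM('a)) * measure lebesgue (ball (0::'a) 1)"
proof -
  have fm: "ball x R \<in> fmeasurable lebesgue" "ball x r \<in> fmeasurable lebesgue"
    by (auto simp: ball_fmeas)
  have f1: "ball x r \<inter> E \<in> lmeasurable" using fm E by (intro fmeasurable_Int_fmeasurable) auto
  have f2: "ball x R - ball x r \<in> lmeasurable" using fm by (intro fmeasurable.Diff) auto
  have "ball x R \<inter> E \<subseteq> (ball x r \<inter> E) \<union> (ball x R - ball x r)" by auto
  hence "measure lebesgue (ball x R \<inter> E) \<le> measure lebesgue ((ball x r \<inter> E) \<union> (ball x R - ball x r))"
    using fm E f1 f2 by (intro measure_mono_fmeasurable) (auto intro: fmeasurable_Int_fmeasurable)
  also have "\<dots> \<le> measure lebesgue (ball x r \<inter> E) + measure lebesgue (ball x R - ball x r)"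
    using f1 f2 by (intro measure_Un_le) auto
  also have "measure lebesgue (ball x R - ball x r) = measure lebesgue (ball x R) - measure lebesgue (ball x r)"
    using fm r by (intro measure_Diff) (auto simp: fmeasurable_def)
  also have "\<dots> = (R ^ DIM('a) - r ^ DIM('a)) * measure lebesgue (ball (0::'a) 1)"
    using r measure_ball_eq[of r x] measure_ball_eq[of R x] by (simp add: algebra_simps)
  finally show ?thesis by simp
qed

lemma mball_mono:
  fixes x :: "'a::euclidean_space"
  assumes E: "E \<in> sets lebesgue" and "ball y s \<subseteq> ball x R"
  shows "measure lebesgue (ball y s \<inter> E) \<le> measure lebesgue (ball x R \<inter> E)"
  using assms by (intro measure_mono_fmeasurable) (auto intro: fmeasurable_Int_fmeasurable simp: ball_fmeas)

lemma mball_cont_x: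
  fixes E :: "'a::euclidean_space set"
  assumes E: "E \<in> sets lebesgue" and r: "r > 0"
  shows "continuous_on UNIV (\<lambda>x. measure lebesgue (ball x r \<inter> E))"
proof -
  let ?c = "measure lebesgue (ball (0::'a) 1)"
  let ?m = "\<lambda>x. measure lebesgue (ball x r \<inter> E)"
  have bnd: "\<bar>?m y - ?m x\<bar> \<le> ((r + dist x y) ^ DIM('a) - r ^ DIM('a)) * ?c" for x y
  proof -
    have s1: "ball y r \<subseteq> ball x (r + dist x y)" "ball x r \<subseteq> ball y (r + dist x y)"
      by (auto simp: ball_def dist_commute intro: order.strict_trans1[OF dist_triangle])
       (metis add.commute add_strict_left_mono dist_commute dist_triangle order_le_less_trans)+
    have "?m y \<le> ?m x + ((r + dist x y) ^ DIM('a) - r ^ DIM('a)) * ?c"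
      using mball_mono[OF E s1(1)] mball_diff[OF E, of r "r + dist x y" x] r by simp
    moreover have "?m x \<le> ?m y + ((r + dist x y) ^ DIM('a) - r ^ DIM('a)) * ?c"
      using mball_mono[OF E s1(2)] mball_diff[OF E, of r "r + dist x y" y] r by (simp add: dist_commute)
    ultimately show ?thesis by linarith
  qed
  show ?thesis unfolding continuous_on_def
  proof (intro ballI)
    fix x :: 'a
    have lim: "((\<lambda>y. ((r + dist x y) ^ DIM('a) - r ^ DIM('a)) * ?c) \<longlongrightarrow> ((r + dist x x) ^ DIM('a) - r ^ DIM('a)) * ?c) (at x within UNIV)"
      by (intro tendsto_intros)
    have "((\<lambda>y. ?m y - ?m x) \<longlongrightarrow> 0) (at x within UNIV)"
      by (rule Lim_null_comparison[OF _ lim[simplified]]) (use bnd in \<open>auto simp: dist_commute\<close>)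
    then show "(?m \<longlongrightarrow> ?m x) (at x within UNIV)"
      by (rule LIM_zero_cancel)
  qed
qed

lemma abs_aux1: "(a::real) \<le> b \<Longrightarrow> b \<le> a + d \<Longrightarrow> \<bar>a - b\<bar> \<le> \<bar>d\<bar>" by arith
lemma abs_aux2: "(a::real) \<le> b \<Longrightarrow> b \<le> a + d \<Longrightarrow> \<bar>b - a\<bar> \<le> \<bar>d\<bar>" by arith

lemma mball_cont_r:
  fixes E :: "'a::euclidean_space set"
  assumes E: "E \<in> sets lebesgue" and r: "r > 0"
  shows "isCont (\<lambda>s. measure lebesgue (ball x s \<inter> E)) r"
proof -
  define c where "c = measure lebesgue (ball (0::'a) 1)"
  define m where "m = (\<lambda>s. measure lebesgue (ball x s \<inter> E))"
  have bnd: "\<bar>m s - m r\<bar> \<le> \<bar>(s ^ DIM('a) - r ^ DIM('a)) * c\<bar>" if s: "s > 0" for s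
  proof (cases "s \<le> r")
    case True
    have 1: "m s \<le> m r" unfolding m_def by (rule mball_mono[OF E]) (use True in auto)
    have 2: "m r \<le> m s + (r ^ DIM('a) - s ^ DIM('a)) * c"
      unfolding m_def c_def using mball_diff[OF E, of s r x] s True by linarith
    have "\<bar>m s - m r\<bar> \<le> \<bar>(r ^ DIM('a) - s ^ DIM('a)) * c\<bar>" by (rule abs_aux1[OF 1 2])
    then show ?thesis by (simp add: abs_mult abs_minus_commute)
  next
    case False
    have 1: "m r \<le> m s" unfolding m_def by (rule mball_mono[OF E]) (use False in auto)
    have 2: "m s \<le> m r + (s ^ DIM('a) - r ^ DIM('a)) * c"
      unfolding m_def c_def using mball_diff[OF E, of r s x] r False by linarith
    show ?thesis by (rule abs_aux2[OF 1 2])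
  qed
  have ev: "eventually (\<lambda>s. s > 0) (at r)"
    using eventually_nhds_in_open[of "{0<..}" r] r by (simp add: eventually_at_filter eventually_mono)
  have lim: "((\<lambda>s. \<bar>(s ^ DIM('a) - r ^ DIM('a)) * c\<bar>) \<longlongrightarrow> \<bar>(r ^ DIM('a) - r ^ DIM('a)) * c\<bar>) (at r)"
    by (intro tendsto_intros)
  have ev2: "eventually (\<lambda>s. norm (m s - m r) \<le> \<bar>(s ^ DIM('a) - r ^ DIM('a)) * c\<bar>) (at r)"
    using ev by (rule eventually_mono) (use bnd in simp)
  have "((\<lambda>s. m s - m r) \<longlongrightarrow> 0) (at r)"
    using Lim_null_comparison[OF ev2] lim by simp
  then show ?thesis unfolding isCont_def m_def by (rule LIM_zero_cancel)
qed

definition ratio :: "'a::euclidean_space set \<Rightarrow> 'a \<Rightarrow> real \<Rightarrow> real" where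
  "ratio E x r = measure lebesgue (ball x r \<inter> E) / measure lebesgue (ball x r)"

definition D0 :: "'a::euclidean_space set \<Rightarrow> 'a \<Rightarrow> bool" where
  "D0 E x \<longleftrightarrow> ((\<lambda>r. ratio E x r) \<longlongrightarrow> 0) (at_right 0)"

lemma ratio_nonneg: "ratio E x r \<ge> 0"
  by (simp add: ratio_def)

lemma ratio_cont_r:
  fixes E :: "'a::euclidean_space set"
  assumes E: "E \<in> sets lebesgue" and r: "r > 0"
  shows "isCont (ratio E x) r"
proof -
  have h1: "isCont (\<lambda>s. measure lebesgue (ball x s \<inter> E) / (s ^ DIM('a) * measure lebesgue (ball (0::'a) 1))) r"
    using r unit_ball_pos[where 'a='a] by (intro continuous_intros mball_cont_r[OF E r]) auto
  have "eventually (\<lambda>s. s > 0) (nhds r)"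
    using eventually_nhds_in_open[of "{0<..}" r] r by simp
  then have h2: "eventually (\<lambda>s. measure lebesgue (ball x s \<inter> E) / (s ^ DIM('a) * measure lebesgue (ball (0::'a) 1)) = ratio E x s) (nhds r)"
  proof (rule eventually_mono)
    fix s :: real assume "s > 0"
    then show "measure lebesgue (ball x s \<inter> E) / (s ^ DIM('a) * measure lebesgue (ball (0::'a) 1)) = ratio E x s"
      unfolding ratio_def by (simp only: measure_ball_eq[OF less_imp_le[OF \<open>s > 0\<close>]])
  qed
  show ?thesis using isCont_cong[OF h2] h1 by simp
qed

lemma ratio_meas:
  fixes E :: "'a::euclidean_space set"
  assumes E: "E \<in> sets lebesgue"
  shows "(\<lambda>x. ratio E x r) \<in> borel_measurable borel"
proof (cases "r > 0")
  case True
  have c0: "r ^ DIM('a) * measure lebesgue (ball (0::'a) 1) \<noteq> 0"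
    using True unit_ball_pos[where 'a='a] by (metis mult_pos_pos zero_less_power less_irrefl)
  have "continuous_on UNIV (\<lambda>x. measure lebesgue (ball x r \<inter> E) / (r ^ DIM('a) * measure lebesgue (ball (0::'a) 1)))"
    by (intro continuous_on_divide continuous_on_const mball_cont_x[OF E True]) (use c0 in blast)
  moreover have "(\<lambda>x. ratio E x r) = (\<lambda>x. measure lebesgue (ball x r \<inter> E) / (r ^ DIM('a) * measure lebesgue (ball (0::'a) 1)))"
    by (rule ext) (simp only: ratio_def measure_ball_eq[OF less_imp_le[OF True]])
  ultimately show ?thesis by (metis borel_measurable_continuous_onI)
next
  case False
  then have "ratio E x r = 0" for x by (simp add: ratio_def)
  then show ?thesis by simp
qed

lemma rat_aux: "((q::rat) < 1 / (of_nat m + 1)) \<longleftrightarrow> (real_of_rat q < 1 / (of_nat m + 1))"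
proof -
  have "real_of_rat (1 / (of_nat m + 1)) = 1 / (of_nat m + 1)"
    by (simp add: of_rat_divide of_rat_add)
  then show ?thesis by (metis of_rat_less)
qed

lemma D0_iff:
  fixes E :: "'a::euclidean_space set"
  assumes E: "E \<in> sets lebesgue"
  shows "D0 E x \<longleftrightarrow> (\<forall>n::nat. \<exists>m::nat. \<forall>q::rat. 0 < q \<and> q < 1 / (of_nat m + 1) \<longrightarrow> ratio E x (of_rat q) \<le> 1 / (of_nat n + 1))"
proof
  assume D: "D0 E x"
  show "\<forall>n::nat. \<exists>m::nat. \<forall>q::rat. 0 < q \<and> q < 1 / (of_nat m + 1) \<longrightarrow> ratio E x (of_rat q) \<le> 1 / (of_nat n + 1)"
  proof
    fix n :: nat
    have "eventually (\<lambda>r. dist (ratio E x r) 0 < 1 / (of_nat n + 1)) (at_right 0)"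
      using D unfolding D0_def tendsto_iff by (auto simp del: dist_real_def)
    then obtain b :: real where b: "b > 0" "\<And>y. y > 0 \<Longrightarrow> y < b \<Longrightarrow> dist (ratio E x y) 0 < 1 / (of_nat n + 1)"
      unfolding eventually_at_right_field by auto
    obtain m where m: "inverse (real (Suc m)) < b" using reals_Archimedean[OF b(1)] by auto
    show "\<exists>m::nat. \<forall>q::rat. 0 < q \<and> q < 1 / (of_nat m + 1) \<longrightarrow> ratio E x (of_rat q) \<le> 1 / (of_nat n + 1)"
    proof (intro exI allI impI)
      fix q :: rat assume q: "0 < q \<and> q < 1 / (of_nat m + 1)"
      have "real_of_rat q < 1 / (of_nat m + 1)"
        using q rat_aux by blast
      then have "real_of_rat q < b" using m by (simp add: inverse_eq_divide add.commute)
      moreover have "real_of_rat q > 0" using q by simp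
      ultimately show "ratio E x (of_rat q) \<le> 1 / (of_nat n + 1)"
        using b(2)[of "of_rat q"] ratio_nonneg[of E x] by (simp add: dist_real_def)
    qed
  qed
next
  assume H: "\<forall>n::nat. \<exists>m::nat. \<forall>q::rat. 0 < q \<and> q < 1 / (of_nat m + 1) \<longrightarrow> ratio E x (of_rat q) \<le> 1 / (of_nat n + 1)"
  show "D0 E x" unfolding D0_def tendsto_iff
  proof (intro allI impI)
    fix e :: real assume e: "e > 0"
    obtain n where n: "inverse (real (Suc n)) < e" using reals_Archimedean[OF e] by auto
    obtain m where m: "\<And>q::rat. 0 < q \<and> q < 1 / (of_nat m + 1) \<Longrightarrow> ratio E x (of_rat q) \<le> 1 / (of_nat n + 1)"
      using H by blast
    have key: "ratio E x y \<le> 1 / (of_nat n + 1)" if y: "0 < y" "y < 1 / (of_nat m + 1)" for y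
    proof (rule ccontr)
      assume "\<not> ?thesis"
      then have gt: "ratio E x y > 1 / (of_nat n + 1)" by simp
      have "isCont (ratio E x) y" by (rule ratio_cont_r[OF E y(1)])
      then have "eventually (\<lambda>z. ratio E x z > 1 / (of_nat n + 1)) (at y)"
        using gt unfolding isCont_def by (rule order_tendstoD)
      then obtain d where d: "d > 0" "\<And>z. z \<noteq> y \<Longrightarrow> dist z y < d \<Longrightarrow> ratio E x z > 1 / (of_nat n + 1)"
        unfolding eventually_at by auto
      obtain r where r: "r \<in> \<rat>" "max 0 (y - d) < r" "r < y"
        using Rats_dense_in_real[of "max 0 (y - d)" y] y d by auto
      obtain q where q: "r = of_rat q" using r(1) Rats_cases by blast
      have "ratio E x r > 1 / (of_nat n + 1)" using d(2)[of r] r by (auto simp: dist_real_def)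
      moreover have "0 < q" using r q by simp
      moreover have "q < 1 / (of_nat m + 1)"
      proof -
        have "of_rat q < (1::real) / (of_nat m + 1)" using r q y by simp
        then show ?thesis using rat_aux by blast
      qed
      ultimately show False using m[of q] q by simp
    qed
    show "eventually (\<lambda>y. dist (ratio E x y) 0 < e) (at_right 0)"
      unfolding eventually_at_right_field
    proof (intro exI conjI allI impI)
      show "(0::real) < 1 / (of_nat m + 1)" by simp
      fix y :: real assume "0 < y" "y < 1 / (of_nat m + 1)"
      then have "ratio E x y \<le> 1 / (of_nat n + 1)" by (rule key)
      then show "dist (ratio E x y) 0 < e"
        using n ratio_nonneg[of E x y] by (simp add: dist_real_def inverse_eq_divide add.commute)
    qed
  qed
qed

lemma D0_meas:
  fixes E :: "'a::euclidean_space set"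
  assumes E: "E \<in> sets lebesgue"
  shows "Measurable.pred borel (D0 E)"
proof -
  have p: "Measurable.pred borel (\<lambda>x. ratio E x r \<le> c)" for r c
    by (rule pred_le_const[OF ratio_meas[OF E]]) simp
  have "Measurable.pred borel (\<lambda>x. \<forall>n::nat. \<exists>m::nat. \<forall>q::rat. 0 < q \<and> q < 1 / (of_nat m + 1) \<longrightarrow> ratio E x (of_rat q) \<le> 1 / (of_nat n + 1))"
    apply (rule pred_intros_countable)+
    apply (rule pred_intros_imp')
    apply (rule p)
    done
  then have "Measurable.pred borel (\<lambda>x. D0 E x)" by (simp only: D0_iff[OF E])
  then show ?thesis by simp
qed




lemma D0_empty: "D0 {} x"
  unfolding D0_def ratio_def by simp

lemma D0_null: "E \<in> null_sets lebesgue \<Longrightarrow> D0 E x"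
proof -
  assume E: "E \<in> null_sets lebesgue"
  have "measure lebesgue (ball x r \<inter> E) = 0" for r
    using E by (intro measure_eq_0_null_sets null_sets_subset[OF E]) auto
  then show ?thesis unfolding D0_def ratio_def by simp
qed

lemma D0_mono:
  assumes E': "E' \<in> sets lebesgue" and sub: "E \<subseteq> E'" and D: "D0 E' x"
  shows "D0 E x"
proof -
  have "ratio E x r \<le> ratio E' x r" for r
  proof -
    have "measure lebesgue (ball x r \<inter> E) \<le> measure lebesgue (ball x r \<inter> E')"
    proof (cases "ball x r \<inter> E \<in> sets lebesgue")
      case True
      then show ?thesis using E' sub
        by (intro measure_mono_fmeasurable) (auto intro: fmeasurable_Int_fmeasurable simp: ball_fmeas)
    next
      case False
      then show ?thesis by (simp add: measure_notin_sets)
    qed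
    then show ?thesis unfolding ratio_def by (rule divide_right_mono) simp
  qed
  then have le: "eventually (\<lambda>r. ratio E x r \<le> ratio E' x r) (at_right 0)"
    by (intro always_eventually) blast
  have ge: "eventually (\<lambda>r. 0 \<le> ratio E x r) (at_right 0)"
    by (intro always_eventually allI ratio_nonneg)
  show ?thesis unfolding D0_def
    by (rule tendsto_sandwich[OF ge le tendsto_const]) (use D in \<open>simp add: D0_def\<close>)
qed

lemma D0_full:
  fixes \<Omega> :: "'a::euclidean_space set"
  assumes \<Omega>: "open \<Omega>" "x \<in> \<Omega>" and E: "E \<in> sets lebesgue" and N: "N \<in> null_sets lebesgue"
    and sub: "\<Omega> - N \<subseteq> E"
  shows "\<not> D0 E x"
proof
  assume D: "D0 E x"
  obtain e where e: "e > 0" "ball x e \<subseteq> \<Omega>" using \<Omega> open_contains_ball by blast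
  have "ratio E x r = 1" if r: "0 < r" "r < e" for r
  proof -
    have bs: "ball x r \<subseteq> \<Omega>" using e r by auto
    have Nf: "N \<in> lmeasurable" using N by (auto simp: fmeasurable_def null_setsD1)
    have "measure lebesgue (ball x r) \<le> measure lebesgue ((ball x r \<inter> E) \<union> N)"
      using bs sub E N Nf by (intro measure_mono_fmeasurable) (auto simp: ball_fmeas intro!: fmeasurable.Un fmeasurable_Int_fmeasurable)
    also have "\<dots> \<le> measure lebesgue (ball x r \<inter> E) + measure lebesgue N"
      using E N Nf by (intro measure_Un_le) (auto simp: ball_fmeas intro!: fmeasurable_Int_fmeasurable)
    also have "measure lebesgue N = 0" using N by (simp add: measure_eq_0_null_sets)
    finally have "measure lebesgue (ball x r) \<le> measure lebesgue (ball x r \<inter> E)" by simp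
    moreover have "measure lebesgue (ball x r \<inter> E) \<le> measure lebesgue (ball x r)"
      using E by (intro measure_mono_fmeasurable) (auto simp: ball_fmeas)
    ultimately show ?thesis unfolding ratio_def using measure_ball_pos[OF r(1), of x] by simp
  qed
  then have "eventually (\<lambda>r. ratio E x r = 1) (at_right 0)"
    unfolding eventually_at_right_field using e by blast
  then have L1: "((\<lambda>r. ratio E x r) \<longlongrightarrow> 1) (at_right (0::real))"
    by (rule tendsto_eventually)
  have L0: "((\<lambda>r. ratio E x r) \<longlongrightarrow> 0) (at_right (0::real))" using D unfolding D0_def .
  have "(1::real) = 0" by (rule tendsto_unique[OF _ L1 L0]) simp
  then show False by simp
qed

lemma vplus:
  fixes \<Omega> :: "'a::euclidean_space set"
  assumes \<Omega>: "open \<Omega>" "x \<in> \<Omega>" and E: "E \<subseteq> \<Omega>"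
  shows "approx_upper \<Omega> (indicator E) x = (if D0 E x then 0 else 1)"
proof -
  have \<Omega>l: "\<Omega> \<in> sets lebesgue" using \<Omega> by (intro sets_completionI_sets) auto
  have nO: "\<not> D0 \<Omega> x" by (rule D0_full[OF \<Omega> \<Omega>l, of "{}"]) auto
  have seteq: "{y\<in>\<Omega>. s < indicator E y} = (if s < 0 then \<Omega> else if s < 1 then E else {})" for s :: real
    using E by (auto simp: indicator_def)
  have "approx_upper \<Omega> (indicator E) x = Inf {s. D0 {y\<in>\<Omega>. s < indicator E y} x}"
    unfolding approx_upper_def D0_def ratio_def ..
  also have "{s::real. D0 {y\<in>\<Omega>. s < indicator E y} x} = {s. if D0 E x then 0 \<le> s else 1 \<le> s}"
  proof (rule Collect_cong)
    fix s :: real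
    show "D0 {y\<in>\<Omega>. s < indicator E y} x \<longleftrightarrow> (if D0 E x then 0 \<le> s else 1 \<le> s)"
      unfolding seteq[of s] using nO D0_empty[of x] by (cases "s < 0"; cases "s < 1") auto
  qed
  also have "{s::real. if D0 E x then 0 \<le> s else 1 \<le> s} = (if D0 E x then {0..} else {1..})" by auto
  finally show ?thesis by simp
qed

lemma vminus:
  fixes \<Omega> :: "'a::euclidean_space set"
  assumes \<Omega>: "open \<Omega>" "x \<in> \<Omega>" and E: "E \<subseteq> \<Omega>"
  shows "approx_lower \<Omega> (indicator E) x = (if D0 (\<Omega> - E) x then 1 else 0)"
proof -
  have \<Omega>l: "\<Omega> \<in> sets lebesgue" using \<Omega> by (intro sets_completionI_sets) auto
  have nO: "\<not> D0 \<Omega> x" by (rule D0_full[OF \<Omega> \<Omega>l, of "{}"]) auto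
  have seteq: "{y\<in>\<Omega>. indicator E y < s} = (if s \<le> 0 then {} else if s \<le> 1 then \<Omega> - E else \<Omega>)" for s :: real
    using E by (auto simp: indicator_def)
  have "approx_lower \<Omega> (indicator E) x = Sup {s. D0 {y\<in>\<Omega>. indicator E y < s} x}"
    unfolding approx_lower_def D0_def ratio_def ..
  also have "{s::real. D0 {y\<in>\<Omega>. indicator E y < s} x} = {s. if D0 (\<Omega> - E) x then s \<le> 1 else s \<le> 0}"
  proof (rule Collect_cong)
    fix s :: real
    show "D0 {y\<in>\<Omega>. indicator E y < s} x \<longleftrightarrow> (if D0 (\<Omega> - E) x then s \<le> 1 else s \<le> 0)"
      unfolding seteq[of s] using nO D0_empty[of x] by (cases "s \<le> 0"; cases "s \<le> 1") auto
  qed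
  also have "{s::real. if D0 (\<Omega> - E) x then s \<le> 1 else s \<le> 0} = (if D0 (\<Omega> - E) x then {..1} else {..0})" by auto
  finally show ?thesis by simp
qed

context
  fixes \<Omega> :: "'a::euclidean_space set" and u :: "'a \<Rightarrow> real" and M :: real
  assumes \<Omega>o: "open \<Omega>"
    and umeas: "(\<lambda>x. indicator \<Omega> x * u x) \<in> borel_measurable lebesgue"
    and ubnd: "AE x in lebesgue. x \<in> \<Omega> \<longrightarrow> \<bar>u x\<bar> \<le> M"
begin

lemma \<Omega>_leb: "\<Omega> \<in> sets lebesgue"
  using \<Omega>o by (intro sets_completionI_sets) auto

lemma sets_gt: "{y\<in>\<Omega>. t < u y} \<in> sets lebesgue"
proof -
  have "{y \<in> space lebesgue. t < indicator \<Omega> y * u y} \<in> sets lebesgue"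
    using umeas[unfolded borel_measurable_iff_greater] by blast
  then have "\<Omega> \<inter> {y \<in> space lebesgue. t < indicator \<Omega> y * u y} \<in> sets lebesgue"
    using \<Omega>_leb by blast
  also have "\<Omega> \<inter> {y \<in> space lebesgue. t < indicator \<Omega> y * u y} = {y\<in>\<Omega>. t < u y}"
    by (auto simp: indicator_def)
  finally show ?thesis .
qed

lemma sets_lt: "{y\<in>\<Omega>. u y < t} \<in> sets lebesgue"
proof -
  have "{y \<in> space lebesgue. indicator \<Omega> y * u y < t} \<in> sets lebesgue"
    using umeas[unfolded borel_measurable_iff_less] by blast
  then have "\<Omega> \<inter> {y \<in> space lebesgue. indicator \<Omega> y * u y < t} \<in> sets lebesgue"
    using \<Omega>_leb by blast
  also have "\<Omega> \<inter> {y \<in> space lebesgue. indicator \<Omega> y * u y < t} = {y\<in>\<Omega>. u y < t}"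
    by (auto simp: indicator_def)
  finally show ?thesis .
qed

lemma sets_le: "{y\<in>\<Omega>. u y \<le> t} \<in> sets lebesgue"
proof -
  have "{y \<in> space lebesgue. indicator \<Omega> y * u y \<le> t} \<in> sets lebesgue"
    using umeas[unfolded borel_measurable_iff_le] by blast
  then have "\<Omega> \<inter> {y \<in> space lebesgue. indicator \<Omega> y * u y \<le> t} \<in> sets lebesgue"
    using \<Omega>_leb by blast
  also have "\<Omega> \<inter> {y \<in> space lebesgue. indicator \<Omega> y * u y \<le> t} = {y\<in>\<Omega>. u y \<le> t}"
    by (auto simp: indicator_def)
  finally show ?thesis .
qed

lemma null_big: "{y\<in>\<Omega>. M < \<bar>u y\<bar>} \<in> null_sets lebesgue"
proof -
  have eq: "{y\<in>\<Omega>. M < \<bar>u y\<bar>} = {y\<in>\<Omega>. M < u y} \<union> {y\<in>\<Omega>. u y < - M}" by auto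
  have S: "{y\<in>\<Omega>. M < \<bar>u y\<bar>} \<in> sets lebesgue" unfolding eq using sets_gt sets_lt by blast
  have "emeasure lebesgue {y\<in>\<Omega>. M < \<bar>u y\<bar>} = 0"
    using ubnd by (subst (asm) AE_iff_measurable[OF S]) auto
  then show ?thesis using S by auto
qed

lemma D0_gt_top: "D0 {y\<in>\<Omega>. t < u y} x" if "M \<le> t"
  by (rule D0_null, rule null_sets_subset[OF null_big]) (use that sets_gt in auto)

lemma D0_lt_bot: "D0 {y\<in>\<Omega>. u y < t} x" if "t \<le> - M"
  by (rule D0_null, rule null_sets_subset[OF null_big]) (use that sets_lt in auto)

lemma notD0_gt_bot: "\<not> D0 {y\<in>\<Omega>. t < u y} x" if "t < - M" "x \<in> \<Omega>"
  by (rule D0_full[OF \<Omega>o that(2) sets_gt null_big]) (use that in auto)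

lemma notD0_lt_top: "\<not> D0 {y\<in>\<Omega>. u y < t} x" if "M < t" "x \<in> \<Omega>"
  by (rule D0_full[OF \<Omega>o that(2) sets_lt null_big]) (use that in auto)

lemma Sp_up: "D0 {y\<in>\<Omega>. s < u y} x \<Longrightarrow> s \<le> t \<Longrightarrow> D0 {y\<in>\<Omega>. t < u y} x"
  by (erule D0_mono[OF sets_gt, rotated]) auto

lemma Sm_down: "D0 {y\<in>\<Omega>. u y < s} x \<Longrightarrow> t \<le> s \<Longrightarrow> D0 {y\<in>\<Omega>. u y < t} x"
  by (erule D0_mono[OF sets_lt, rotated]) auto

lemma Sp_lower: "x \<in> \<Omega> \<Longrightarrow> D0 {y\<in>\<Omega>. s < u y} x \<Longrightarrow> - M \<le> s"
  using notD0_gt_bot by force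

lemma Sm_upper: "x \<in> \<Omega> \<Longrightarrow> D0 {y\<in>\<Omega>. u y < s} x \<Longrightarrow> s \<le> M"
  using notD0_lt_top by force

lemma up_bounds: "x \<in> \<Omega> \<Longrightarrow> - M \<le> approx_upper \<Omega> u x \<and> approx_upper \<Omega> u x \<le> M"
  unfolding approx_upper_def D0_def[symmetric] ratio_def[symmetric]
  using D0_gt_top[of M x] Sp_lower[of x]
  by (auto intro!: cInf_greatest cInf_lower bdd_belowI[of _ "- M"])

lemma lo_bounds: "x \<in> \<Omega> \<Longrightarrow> - M \<le> approx_lower \<Omega> u x \<and> approx_lower \<Omega> u x \<le> M"
  unfolding approx_lower_def D0_def[symmetric] ratio_def[symmetric]
  using D0_lt_bot[of "- M" x] Sm_upper[of x]
  by (auto intro!: cSup_least cSup_upper bdd_aboveI[of _ M])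

lemma up_eq: "approx_upper \<Omega> u x = Inf {t. D0 {y\<in>\<Omega>. t < u y} x}"
  unfolding approx_upper_def D0_def ratio_def ..

lemma lo_eq: "approx_lower \<Omega> u x = Sup {t. D0 {y\<in>\<Omega>. u y < t} x}"
  unfolding approx_lower_def D0_def ratio_def ..

lemma up_lt: "x \<in> \<Omega> \<Longrightarrow> t < approx_upper \<Omega> u x \<Longrightarrow> \<not> D0 {y\<in>\<Omega>. t < u y} x"
  unfolding up_eq using Sp_lower[of x]
  by (metis (mono_tags, lifting) bdd_belowI cInf_lower mem_Collect_eq not_le)

lemma up_gt: "x \<in> \<Omega> \<Longrightarrow> approx_upper \<Omega> u x < t \<Longrightarrow> D0 {y\<in>\<Omega>. t < u y} x"
proof -
  assume x: "x \<in> \<Omega>" and lt: "approx_upper \<Omega> u x < t"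
  have ne: "{t. D0 {y\<in>\<Omega>. t < u y} x} \<noteq> {}" using D0_gt_top[of M x] by auto
  obtain s where "s \<in> {t. D0 {y\<in>\<Omega>. t < u y} x}" "s < t"
    using lt unfolding up_eq using cInf_less_iff[OF ne] Sp_lower[OF x]
    by (metis (no_types, lifting) bdd_belowI mem_Collect_eq)
  then show ?thesis using Sp_up by auto
qed

lemma lo_gt: "x \<in> \<Omega> \<Longrightarrow> t < approx_lower \<Omega> u x \<Longrightarrow> D0 {y\<in>\<Omega>. u y < t} x"
proof -
  assume x: "x \<in> \<Omega>" and lt: "t < approx_lower \<Omega> u x"
  have ne: "{t. D0 {y\<in>\<Omega>. u y < t} x} \<noteq> {}" using D0_lt_bot[of "- M" x] by auto
  obtain s where "s \<in> {t. D0 {y\<in>\<Omega>. u y < t} x}" "t < s"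
    using lt unfolding lo_eq using less_cSup_iff[OF ne] Sm_upper[OF x]
    by (metis (no_types, lifting) bdd_aboveI mem_Collect_eq)
  then show ?thesis using Sm_down by auto
qed

lemma lo_lt: "x \<in> \<Omega> \<Longrightarrow> approx_lower \<Omega> u x < t \<Longrightarrow> \<not> D0 {y\<in>\<Omega>. u y < t} x"
  unfolding lo_eq using Sm_upper[of x]
  by (metis (mono_tags, lifting) bdd_aboveI cSup_upper mem_Collect_eq not_le)

lemma lo_gt_le: "x \<in> \<Omega> \<Longrightarrow> t < approx_lower \<Omega> u x \<Longrightarrow> D0 {y\<in>\<Omega>. u y \<le> t} x"
proof -
  assume x: "x \<in> \<Omega>" and lt: "t < approx_lower \<Omega> u x"
  obtain s where s: "t < s" "s < approx_lower \<Omega> u x" using lt dense by blast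
  have D: "D0 {y\<in>\<Omega>. u y < s} x" by (rule lo_gt[OF x s(2)])
  show ?thesis by (rule D0_mono[OF sets_lt _ D]) (use s in auto)
qed

lemma lo_lt_le: "x \<in> \<Omega> \<Longrightarrow> approx_lower \<Omega> u x < t \<Longrightarrow> \<not> D0 {y\<in>\<Omega>. u y \<le> t} x"
proof
  assume x: "x \<in> \<Omega>" and lt: "approx_lower \<Omega> u x < t" and D: "D0 {y\<in>\<Omega>. u y \<le> t} x"
  have "D0 {y\<in>\<Omega>. u y < t} x" by (rule D0_mono[OF sets_le _ D]) auto
  then show False using lo_lt[OF x lt] by simp
qed

lemma upb_meas: "(\<lambda>x. if x \<in> \<Omega> then approx_upper \<Omega> u x else 0) \<in> borel_measurable borel"
proof (subst borel_measurable_iff_less, intro allI)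
  fix a :: real
  have Ob: "\<Omega> \<in> sets borel" using \<Omega>o by auto
  have eq: "{w \<in> space borel. (if w \<in> \<Omega> then approx_upper \<Omega> u w else 0) < a} =
    {w \<in> space borel. (w \<in> \<Omega> \<and> (\<exists>q::rat. of_rat q < a \<and> D0 {y\<in>\<Omega>. of_rat q < u y} w)) \<or> (w \<notin> \<Omega> \<and> 0 < a)}"
  proof (intro Collect_cong conj_cong refl)
    fix w :: 'a
    show "((if w \<in> \<Omega> then approx_upper \<Omega> u w else 0) < a) =
      ((w \<in> \<Omega> \<and> (\<exists>q::rat. of_rat q < a \<and> D0 {y\<in>\<Omega>. of_rat q < u y} w)) \<or> (w \<notin> \<Omega> \<and> 0 < a))"
    proof (cases "w \<in> \<Omega>")
      case True
      have "approx_upper \<Omega> u w < a \<longleftrightarrow> (\<exists>q::rat. of_rat q < a \<and> D0 {y\<in>\<Omega>. of_rat q < u y} w)"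
      proof
        assume lt: "approx_upper \<Omega> u w < a"
        obtain r where r: "r \<in> \<rat>" "approx_upper \<Omega> u w < r" "r < a" using Rats_dense_in_real[OF lt] by blast
        obtain q where q: "r = of_rat q" using r(1) Rats_cases by blast
        show "\<exists>q::rat. of_rat q < a \<and> D0 {y\<in>\<Omega>. of_rat q < u y} w"
          using up_gt[OF True r(2)] r q by blast
      next
        assume "\<exists>q::rat. of_rat q < a \<and> D0 {y\<in>\<Omega>. of_rat q < u y} w"
        then obtain q :: rat where q: "of_rat q < a" "D0 {y\<in>\<Omega>. of_rat q < u y} w" by blast
        then have "\<not> of_rat q < approx_upper \<Omega> u w" using up_lt[OF True] by blast
        then show "approx_upper \<Omega> u w < a" using q by simp
      qed
      then show ?thesis using True by simp
    qed simp
  qed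
  have "Measurable.pred borel (\<lambda>w. (w \<in> \<Omega> \<and> (\<exists>q::rat. of_rat q < a \<and> D0 {y\<in>\<Omega>. of_rat q < u y} w)) \<or> (w \<notin> \<Omega> \<and> 0 < a))"
    using Ob D0_meas[OF sets_gt] by measurable
  then show "{w \<in> space borel. (if w \<in> \<Omega> then approx_upper \<Omega> u w else 0) < a} \<in> sets borel"
    unfolding eq by (rule predE)
qed

lemma lob_meas: "(\<lambda>x. if x \<in> \<Omega> then approx_lower \<Omega> u x else 0) \<in> borel_measurable borel"
proof (subst borel_measurable_iff_greater, intro allI)
  fix a :: real
  have Ob: "\<Omega> \<in> sets borel" using \<Omega>o by auto
  have eq: "{w \<in> space borel. a < (if w \<in> \<Omega> then approx_lower \<Omega> u w else 0)} =
    {w \<in> space borel. (w \<in> \<Omega> \<and> (\<exists>q::rat. a < of_rat q \<and> D0 {y\<in>\<Omega>. u y < of_rat q} w)) \<or> (w \<notin> \<Omega> \<and> a < 0)}"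
  proof (intro Collect_cong conj_cong refl)
    fix w :: 'a
    show "(a < (if w \<in> \<Omega> then approx_lower \<Omega> u w else 0)) =
      ((w \<in> \<Omega> \<and> (\<exists>q::rat. a < of_rat q \<and> D0 {y\<in>\<Omega>. u y < of_rat q} w)) \<or> (w \<notin> \<Omega> \<and> a < 0))"
    proof (cases "w \<in> \<Omega>")
      case True
      have "a < approx_lower \<Omega> u w \<longleftrightarrow> (\<exists>q::rat. a < of_rat q \<and> D0 {y\<in>\<Omega>. u y < of_rat q} w)"
      proof
        assume lt: "a < approx_lower \<Omega> u w"
        obtain r where r: "r \<in> \<rat>" "a < r" "r < approx_lower \<Omega> u w" using Rats_dense_in_real[OF lt] by blast
        obtain q where q: "r = of_rat q" using r(1) Rats_cases by blast
        show "\<exists>q::rat. a < of_rat q \<and> D0 {y\<in>\<Omega>. u y < of_rat q} w"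
          using lo_gt[OF True r(3)] r q by blast
      next
        assume "\<exists>q::rat. a < of_rat q \<and> D0 {y\<in>\<Omega>. u y < of_rat q} w"
        then obtain q :: rat where q: "a < of_rat q" "D0 {y\<in>\<Omega>. u y < of_rat q} w" by blast
        then have "\<not> approx_lower \<Omega> u w < of_rat q" using lo_lt[OF True] by blast
        then show "a < approx_lower \<Omega> u w" using q by simp
      qed
      then show ?thesis using True by simp
    qed simp
  qed
  have "Measurable.pred borel (\<lambda>w. (w \<in> \<Omega> \<and> (\<exists>q::rat. a < of_rat q \<and> D0 {y\<in>\<Omega>. u y < of_rat q} w)) \<or> (w \<notin> \<Omega> \<and> a < 0))"
    using Ob D0_meas[OF sets_lt] by measurable
  then show "{w \<in> space borel. a < (if w \<in> \<Omega> then approx_lower \<Omega> u w else 0)} \<in> sets borel"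
    unfolding eq by (rule predE)
qed

end





lemma AE_meas_completion:
  fixes f g :: "'a \<Rightarrow> real"
  assumes g: "g \<in> borel_measurable M" and ae: "AE x in M. f x = g x"
  shows "f \<in> borel_measurable (completion M)"
proof (subst borel_measurable_iff_less, intro allI)
  fix a :: real
  have A: "{x \<in> space (completion M). g x < a} \<in> sets (completion M)"
    using g by (intro sets_completionI_sets) (auto simp: borel_measurable_iff_less[THEN iffD1])
  have "AE x in completion M. x \<in> {x \<in> space (completion M). g x < a} \<longleftrightarrow> x \<in> {x \<in> space (completion M). f x < a}"
    using AE_completion[OF ae] by eventually_elim auto
  then show "{x \<in> space (completion M). f x < a} \<in> sets (completion M)"
    by (rule completion.in_sets_AE[OF _ A]) auto
qed

definition sgnind :: "real \<Rightarrow> real \<Rightarrow> real" where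
  "sgnind s t = (if 0 \<le> s then (if 0 < t \<and> t < s then 1 else 0) else (if s < t \<and> t < 0 then -1 else 0))"

definition hind :: "real \<Rightarrow> real \<Rightarrow> real" where
  "hind s t = (if t < s then 1 else 0) - (if t < 0 then 1 else 0)"

lemma interval_sgnind:
  fixes g :: "real \<Rightarrow> 'b::{banach, second_countable_topology}"
  shows "interval_lebesgue_integral lborel (ereal 0) (ereal s) g = (\<integral>t. sgnind s t *\<^sub>R g t \<partial>lborel)"
proof (cases "0 \<le> s")
  case True
  then show ?thesis
    by (simp add: interval_lebesgue_integral_def set_lebesgue_integral_def sgnind_def indicator_def of_bool_def)
next
  case False
  then have "interval_lebesgue_integral lborel (ereal 0) (ereal s) g = - (\<integral>t. indicator {s<..<0} t *\<^sub>R g t \<partial>lborel)"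
    by (simp add: interval_lebesgue_integral_def set_lebesgue_integral_def)
  also have "\<dots> = (\<integral>t. - (indicator {s<..<0} t *\<^sub>R g t) \<partial>lborel)"
    by (rule integral_minus[symmetric])
  also have "\<dots> = (\<integral>t. sgnind s t *\<^sub>R g t \<partial>lborel)"
    using False by (intro Bochner_Integration.integral_cong) (auto simp: sgnind_def indicator_def)
  finally show ?thesis .
qed

lemma sgnind_meas[measurable]:
  assumes [measurable]: "g \<in> borel_measurable M" "h \<in> borel_measurable M"
  shows "(\<lambda>x. sgnind (g x) (h x)) \<in> borel_measurable M"
  unfolding sgnind_def by measurable

lemma hind_meas[measurable]:
  assumes [measurable]: "g \<in> borel_measurable M" "h \<in> borel_measurable M"
  shows "(\<lambda>x. hind (g x) (h x)) \<in> borel_measurable M"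
  unfolding hind_def by measurable

lemma hind_AE: "AE t in lborel. hind s t = sgnind s t"
  using AE_lborel_singleton[of 0] AE_lborel_singleton[of s]
  by eventually_elim (auto simp: hind_def sgnind_def)

lemma hind_bound: "\<bar>s\<bar> \<le> M \<Longrightarrow> \<bar>hind s t\<bar> \<le> indicator {-M..M} t"
  by (auto simp: hind_def indicator_def)

lemma sgnind_bound: "\<bar>s\<bar> \<le> M \<Longrightarrow> \<bar>sgnind s t\<bar> \<le> indicator {-M..M} t"
  by (auto simp: sgnind_def indicator_def)

lemma sgnind_abs_le1: "\<bar>sgnind s t\<bar> \<le> 1"
  by (auto simp: sgnind_def)

lemma hind_abs_le1: "\<bar>hind s t\<bar> \<le> 1"
  by (auto simp: hind_def)



lemma density_le_bound:
  fixes g :: "'a \<Rightarrow> real"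
  assumes fin: "finite_measure \<sigma>" and g[measurable]: "g \<in> borel_measurable \<sigma>"
    and le: "\<And>A. A \<in> sets \<sigma> \<Longrightarrow> emeasure (density \<sigma> (\<lambda>x. ennreal \<bar>g x\<bar>)) A \<le> emeasure \<sigma> A"
  shows "AE x in \<sigma>. \<bar>g x\<bar> \<le> 1"
proof -
  interpret finite_measure \<sigma> by fact
  define A where "A = {x\<in>space \<sigma>. 1 < \<bar>g x\<bar>}"
  have A[measurable]: "A \<in> sets \<sigma>" unfolding A_def by measurable
  have "emeasure (density \<sigma> (\<lambda>x. ennreal \<bar>g x\<bar>)) A = (\<integral>\<^sup>+x. ennreal \<bar>g x\<bar> * indicator A x \<partial>\<sigma>)"
    by (rule emeasure_density) auto
  also have "\<dots> = (\<integral>\<^sup>+x. indicator A x + ennreal (\<bar>g x\<bar> - 1) * indicator A x \<partial>\<sigma>)"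
  proof (rule nn_integral_cong)
    fix x assume "x \<in> space \<sigma>"
    show "ennreal \<bar>g x\<bar> * indicator A x = indicator A x + ennreal (\<bar>g x\<bar> - 1) * indicator A x"
    proof (cases "x \<in> A")
      case True
      then have "0 \<le> \<bar>g x\<bar> - 1" unfolding A_def by auto
      then have "ennreal \<bar>g x\<bar> = 1 + ennreal (\<bar>g x\<bar> - 1)"
        using ennreal_plus[of 1 "\<bar>g x\<bar> - 1"] by simp
      then show ?thesis using True by simp
    qed simp
  qed
  also have "\<dots> = emeasure \<sigma> A + (\<integral>\<^sup>+x. ennreal (\<bar>g x\<bar> - 1) * indicator A x \<partial>\<sigma>)"
    by (subst nn_integral_add) auto
  finally have "emeasure \<sigma> A + (\<integral>\<^sup>+x. ennreal (\<bar>g x\<bar> - 1) * indicator A x \<partial>\<sigma>) \<le> emeasure \<sigma> A + 0"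
    using le[OF A] by simp
  then have "(\<integral>\<^sup>+x. ennreal (\<bar>g x\<bar> - 1) * indicator A x \<partial>\<sigma>) = 0"
    using ennreal_add_left_cancel_le[of "emeasure \<sigma> A"] emeasure_real by auto
  then have "AE x in \<sigma>. ennreal (\<bar>g x\<bar> - 1) * indicator A x = 0"
    by (subst (asm) nn_integral_0_iff_AE) auto
  from this AE_space show ?thesis
    by eventually_elim (auto simp: A_def indicator_def ennreal_eq_0_iff split: if_splits)
qed

lemma grad_zero_outside:
  fixes \<phi> :: "'a::euclidean_space \<Rightarrow> real"
  assumes K: "closed K" and z: "\<And>x. x \<notin> K \<Longrightarrow> \<phi> x = 0" and x: "x \<notin> K"
  shows "grad \<phi> x = 0"
proof -
  have "((\<lambda>_. 0::real) has_derivative (\<lambda>h. 0)) (at x)" by simp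
  then have "(\<phi> has_derivative (\<lambda>h. 0)) (at x)"
    by (rule has_derivative_transform_within_open[where s="- K"]) (use K x z in auto)
  then have "frechet_derivative \<phi> (at x) = (\<lambda>h. 0)"
    by (rule frechet_derivative_at[symmetric])
  then show ?thesis unfolding grad_def by simp
qed

lemma C1c_props:
  fixes \<phi> :: "'a::euclidean_space \<Rightarrow> real"
  assumes "C1c \<Omega> \<phi>"
  obtains K C G where "compact K" "K \<subseteq> \<Omega>" "\<And>x. x \<notin> K \<Longrightarrow> \<phi> x = 0"
    "\<And>x. x \<notin> K \<Longrightarrow> grad \<phi> x = 0" "\<And>x. \<bar>\<phi> x\<bar> \<le> C" "\<And>x. norm (grad \<phi> x) \<le> G"
    "continuous_on UNIV \<phi>" "continuous_on UNIV (grad \<phi>)"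
proof -
  from assms obtain K where K: "compact K" "K \<subseteq> \<Omega>" "\<And>x. x \<notin> K \<Longrightarrow> \<phi> x = 0"
    and d: "\<And>x. \<phi> differentiable (at x)" and gc: "continuous_on UNIV (grad \<phi>)"
    unfolding C1c_def by blast
  have pc: "continuous_on UNIV \<phi>"
    using d by (simp add: differentiable_imp_continuous_within continuous_at_imp_continuous_on)
  have gz: "grad \<phi> x = 0" if "x \<notin> K" for x
    by (rule grad_zero_outside[OF compact_imp_closed[OF K(1)] K(3) that])
  obtain C where C: "\<And>y. y \<in> \<phi> ` K \<Longrightarrow> norm y \<le> C"
    using compact_imp_bounded[OF compact_continuous_image[OF continuous_on_subset[OF pc] K(1)]]
    unfolding bounded_iff by auto
  obtain G where G: "\<And>y. y \<in> grad \<phi> ` K \<Longrightarrow> norm y \<le> G"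
    using compact_imp_bounded[OF compact_continuous_image[OF continuous_on_subset[OF gc] K(1)]]
    unfolding bounded_iff by auto
  show ?thesis
  proof (rule that[OF K(1,2,3) gz _ _ pc gc])
    fix x show "\<bar>\<phi> x\<bar> \<le> max C 0" using C[of "\<phi> x"] K(3)[of x] by (cases "x \<in> K") auto
    show "norm (grad \<phi> x) \<le> max G 0" using G[of "grad \<phi> x"] gz[of x] by (cases "x \<in> K") auto
  qed auto
qed




lemma hind_interval:
  assumes q: "q \<in> borel_measurable lborel"
  shows "(\<integral>t. hind s t * q t \<partial>lborel) = interval_lebesgue_integral lborel (ereal 0) (ereal s) q"
proof -
  have "(\<integral>t. hind s t * q t \<partial>lborel) = (\<integral>t. sgnind s t *\<^sub>R q t \<partial>lborel)"
    using hind_AE[of s] by (intro integral_cong_AE) (use q in auto)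
  then show ?thesis by (simp add: interval_sgnind)
qed

lemma hind_integrable:
  fixes q :: "real \<Rightarrow> real"
  assumes q: "q \<in> borel_measurable lborel" and B: "AE t in lborel. \<bar>q t\<bar> \<le> B" and s: "\<bar>s\<bar> \<le> M"
  shows "integrable lborel (\<lambda>t. hind s t * q t)"
proof (rule Bochner_Integration.integrable_bound)
  show "integrable lborel (\<lambda>t. \<bar>B\<bar> * indicator {-M..M} t :: real)"
    by (intro integrable_mult_right integrable_real_indicator) (auto simp: emeasure_lborel_Icc_eq)
  show "(\<lambda>t. hind s t * q t) \<in> borel_measurable lborel" using q by measurable
  show "AE t in lborel. norm (hind s t * q t) \<le> norm (\<bar>B\<bar> * indicator {-M..M} t :: real)"
    using B
  proof eventually_elim
    fix t assume "\<bar>q t\<bar> \<le> B"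
    then have "\<bar>hind s t\<bar> * \<bar>q t\<bar> \<le> indicator {-M..M} t * \<bar>B\<bar>"
      using hind_bound[OF s, of t] by (intro mult_mono) auto
    then show "norm (hind s t * q t) \<le> norm (\<bar>B\<bar> * indicator {-M..M} t :: real)"
      by (simp add: abs_mult mult.commute)
  qed
qed

context
  fixes \<Omega> :: "'a::euclidean_space set" and b :: "'a \<Rightarrow> real \<Rightarrow> 'a"
    and \<sigma> :: "'a measure" and f :: "'a \<Rightarrow> real \<Rightarrow> real"
    and u lam \<phi> :: "'a \<Rightarrow> real"
  assumes open_\<Omega>: "open \<Omega>"
    and b1_meas: "(\<lambda>p. b (fst p) (snd p)) \<in> borel_measurable (restrict_space borel (\<Omega> \<times> UNIV))"
    and b1_bdd: "\<exists>M. \<forall>x\<in>\<Omega>. \<forall>t. norm (b x t) \<le> M"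
    and \<sigma>_sets: "sets \<sigma> = sets borel" and \<sigma>_finite: "finite_measure \<sigma>"
    and f_meas: "(\<lambda>p. f (fst p) (snd p)) \<in> borel_measurable borel"
    and b3_div: "\<And>t \<psi>. C1c \<Omega> \<psi> \<Longrightarrow>
        (LINT x:\<Omega>|lebesgue. b x t \<bullet> grad \<psi> x) = - (\<integral>x. \<psi> x * f x t \<partial>\<sigma>)"
    and b4_upper: "\<And>t A. A \<in> sets borel \<Longrightarrow>
        emeasure (density \<sigma> (\<lambda>x. ennreal \<bar>f x t\<bar>)) A \<le> emeasure \<sigma> A"
    and u_BV: "BV \<Omega> u" and u_Linf: "Linf \<Omega> u"
    and lam_meas: "lam \<in> borel_measurable (restrict_space borel \<Omega>)"
    and lam_range: "\<forall>x\<in>\<Omega>. 0 \<le> lam x \<and> lam x \<le> 1"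
    and \<phi>: "C1c \<Omega> \<phi>"
begin

interpretation \<sigma>F: finite_measure \<sigma> by (rule \<sigma>_finite)

lemma \<Omega>_borel[measurable]: "\<Omega> \<in> sets borel"
  using open_\<Omega> by simp

lemma umeas: "(\<lambda>x. indicator \<Omega> x * u x) \<in> borel_measurable lebesgue"
  using u_BV unfolding BV_def set_integrable_def by (auto dest: borel_measurable_integrable)

definition "Mu = max 0 (SOME M. AE x in lebesgue. x \<in> \<Omega> \<longrightarrow> \<bar>u x\<bar> \<le> M)"

lemma Mu_nonneg: "0 \<le> Mu" unfolding Mu_def by simp

lemma ubnd: "AE x in lebesgue. x \<in> \<Omega> \<longrightarrow> \<bar>u x\<bar> \<le> Mu"
proof -
  have "\<exists>M. AE x in lebesgue. x \<in> \<Omega> \<longrightarrow> \<bar>u x\<bar> \<le> M" using u_Linf unfolding Linf_def .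
  then have "AE x in lebesgue. x \<in> \<Omega> \<longrightarrow> \<bar>u x\<bar> \<le> (SOME M. AE x in lebesgue. x \<in> \<Omega> \<longrightarrow> \<bar>u x\<bar> \<le> M)"
    by (rule someI_ex)
  then show ?thesis unfolding Mu_def by eventually_elim auto
qed

definition "up x = (if x \<in> \<Omega> then approx_upper \<Omega> u x else 0)"
definition "lo x = (if x \<in> \<Omega> then approx_lower \<Omega> u x else 0)"
definition "lamb x = (if x \<in> \<Omega> then lam x else 0)"

lemma up_borel[measurable]: "up \<in> borel_measurable borel"
  unfolding up_def[abs_def] by (rule upb_meas[OF open_\<Omega> umeas ubnd])

lemma lo_borel[measurable]: "lo \<in> borel_measurable borel"
  unfolding lo_def[abs_def] by (rule lob_meas[OF open_\<Omega> umeas ubnd])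

lemma lamb_borel[measurable]: "lamb \<in> borel_measurable borel"
  using lam_meas unfolding lamb_def[abs_def]
  by (subst (asm) measurable_restrict_space_iff) auto

lemma up_bnd: "\<bar>up x\<bar> \<le> Mu"
  using up_bounds[OF open_\<Omega> umeas ubnd, of x] Mu_nonneg unfolding up_def by auto

lemma lo_bnd: "\<bar>lo x\<bar> \<le> Mu"
  using lo_bounds[OF open_\<Omega> umeas ubnd, of x] Mu_nonneg unfolding lo_def by auto

lemma lamb_range: "0 \<le> lamb x \<and> lamb x \<le> 1"
  using lam_range unfolding lamb_def by auto

definition "Mb = (SOME M. \<forall>x\<in>\<Omega>. \<forall>t. norm (b x t) \<le> M)"
definition "bb x t = (if x \<in> \<Omega> then b x t else 0)"

lemma bb_bnd: "norm (bb x t) \<le> max Mb 0"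
proof -
  have "\<forall>x\<in>\<Omega>. \<forall>t. norm (b x t) \<le> Mb" unfolding Mb_def by (rule someI_ex[OF b1_bdd])
  then show ?thesis unfolding bb_def by (auto simp: le_max_iff_disj)
qed

lemma bb_borel: "(\<lambda>p. bb (fst p) (snd p)) \<in> borel_measurable (borel \<Otimes>\<^sub>M borel)"
proof -
  have "\<Omega> \<times> UNIV \<in> sets borel" using open_\<Omega> by (auto intro!: borel_open open_Times)
  then have "(\<lambda>p. if p \<in> \<Omega> \<times> UNIV then b (fst p) (snd p) else 0) \<in> borel_measurable borel"
    using b1_meas by (subst (asm) measurable_restrict_space_iff) auto
  also have "(\<lambda>p. if p \<in> \<Omega> \<times> UNIV then b (fst p) (snd p) else 0) = (\<lambda>p. bb (fst p) (snd p))"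
    by (auto simp: bb_def)
  finally show ?thesis by (simp add: borel_prod)
qed

lemma f_borel: "(\<lambda>p. f (fst p) (snd p)) \<in> borel_measurable (borel \<Otimes>\<^sub>M borel)"
  using f_meas by (simp add: borel_prod)

lemma bb_swap[measurable]: "(\<lambda>p. bb (snd p) (fst p)) \<in> borel_measurable (lborel \<Otimes>\<^sub>M lborel)"
proof -
  have "(\<lambda>p. bb (fst p) (snd p)) \<in> borel_measurable (lborel \<Otimes>\<^sub>M lborel)"
    using bb_borel by (subst measurable_cong_sets[OF sets_pair_measure_cong[OF sets_lborel sets_lborel] refl])
  from measurable_compose[OF measurable_pair_swap' this] show ?thesis by (simp add: case_prod_beta)
qed

lemma f_swap[measurable]: "(\<lambda>p. f (snd p) (fst p)) \<in> borel_measurable (lborel \<Otimes>\<^sub>M \<sigma>)"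
proof -
  have "(\<lambda>p. f (fst p) (snd p)) \<in> borel_measurable (\<sigma> \<Otimes>\<^sub>M lborel)"
    using f_borel by (subst measurable_cong_sets[OF sets_pair_measure_cong[OF \<sigma>_sets sets_lborel] refl])
  from measurable_compose[OF measurable_pair_swap' this] show ?thesis by (simp add: case_prod_beta)
qed

lemma f_bl[measurable]: "(\<lambda>p. f (fst p) (snd p)) \<in> borel_measurable (borel \<Otimes>\<^sub>M lborel)"
  using f_borel by (subst measurable_cong_sets[OF sets_pair_measure_cong[OF refl sets_lborel] refl])

definition "ug = (SOME g. g \<in> borel_measurable lborel \<and> (AE x in lborel. indicator \<Omega> x * u x = g x))"

lemma ug: "ug \<in> borel_measurable lborel" "AE x in lborel. indicator \<Omega> x * u x = ug x"
proof -
  have "\<exists>g. g \<in> borel_measurable lborel \<and> (AE x in lborel. indicator \<Omega> x * u x = g x)"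
    using completion_ex_borel_measurable_real[OF umeas] by blast
  from someI_ex[OF this] show "ug \<in> borel_measurable lborel" "AE x in lborel. indicator \<Omega> x * u x = ug x"
    unfolding ug_def by auto
qed

definition "ub x = max (- Mu) (min Mu (ug x))"

lemma ub_borel[measurable]: "ub \<in> borel_measurable borel"
proof -
  have [measurable]: "ug \<in> borel_measurable borel" using ug(1) by simp
  show ?thesis unfolding ub_def[abs_def] by measurable
qed

lemma ub_bnd: "\<bar>ub x\<bar> \<le> Mu"
  using Mu_nonneg unfolding ub_def by auto

lemma u_ub: "AE x in lebesgue. x \<in> \<Omega> \<longrightarrow> u x = ub x"
proof -
  have "AE x in lborel. x \<in> \<Omega> \<longrightarrow> \<bar>u x\<bar> \<le> Mu" using ubnd by (simp add: AE_completion_iff)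
  then have "AE x in lborel. x \<in> \<Omega> \<longrightarrow> u x = ub x"
    using ug(2) by eventually_elim (auto simp: ub_def)
  then show ?thesis by (rule AE_completion)
qed

definition "P\<phi> K C G \<longleftrightarrow> compact K \<and> K \<subseteq> \<Omega> \<and> (\<forall>x. x \<notin> K \<longrightarrow> \<phi> x = 0) \<and> (\<forall>x. x \<notin> K \<longrightarrow> grad \<phi> x = 0)
   \<and> (\<forall>x. \<bar>\<phi> x\<bar> \<le> C) \<and> (\<forall>x. norm (grad \<phi> x) \<le> G)"
definition "K\<phi> = (SOME K. \<exists>C G. P\<phi> K C G)"
definition "C\<phi> = (SOME C. \<exists>G. P\<phi> K\<phi> C G)"
definition "G\<phi> = (SOME G. P\<phi> K\<phi> C\<phi> G)"

lemma P\<phi>: "P\<phi> K\<phi> C\<phi> G\<phi>"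
proof -
  obtain K C G where "compact K" "K \<subseteq> \<Omega>" "\<And>x. x \<notin> K \<Longrightarrow> \<phi> x = 0"
    "\<And>x. x \<notin> K \<Longrightarrow> grad \<phi> x = 0" "\<And>x. \<bar>\<phi> x\<bar> \<le> C" "\<And>x. norm (grad \<phi> x) \<le> G"
    using C1c_props[OF \<phi>] by metis
  then have "\<exists>K C G. P\<phi> K C G" unfolding P\<phi>_def by blast
  then have "\<exists>C G. P\<phi> K\<phi> C G" unfolding K\<phi>_def by (rule someI_ex)
  then have "\<exists>G. P\<phi> K\<phi> C\<phi> G" unfolding C\<phi>_def by (rule someI_ex)
  then show ?thesis unfolding G\<phi>_def by (rule someI_ex)
qed

lemma K\<phi>: "compact K\<phi>" "K\<phi> \<subseteq> \<Omega>" "\<And>x. x \<notin> K\<phi> \<Longrightarrow> \<phi> x = 0" "\<And>x. x \<notin> K\<phi> \<Longrightarrow> grad \<phi> x = 0"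
  "\<And>x. \<bar>\<phi> x\<bar> \<le> C\<phi>" "\<And>x. norm (grad \<phi> x) \<le> G\<phi>"
  using P\<phi> unfolding P\<phi>_def by auto

lemma phi_borel[measurable]: "\<phi> \<in> borel_measurable borel" "(\<lambda>x. grad \<phi> x) \<in> borel_measurable borel"
proof -
  obtain K C G where "continuous_on UNIV \<phi>" "continuous_on UNIV (grad \<phi>)"
    using C1c_props[OF \<phi>] by metis
  then show "\<phi> \<in> borel_measurable borel" "(\<lambda>x. grad \<phi> x) \<in> borel_measurable borel"
    by (auto intro: borel_measurable_continuous_onI)
qed

lemma phi_outside: "x \<notin> \<Omega> \<Longrightarrow> \<phi> x = 0"
  using K\<phi>(2,3) by auto

lemma f_t_borel[measurable]: "(\<lambda>x. f x t) \<in> borel_measurable borel"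
proof -
  have "(\<lambda>x. (x, t)) \<in> borel \<rightarrow>\<^sub>M borel \<Otimes>\<^sub>M lborel" by measurable
  from measurable_compose[OF this f_bl] show ?thesis by simp
qed

lemma f_t_bnd: "AE x in \<sigma>. \<bar>f x t\<bar> \<le> 1"
  by (rule density_le_bound[OF \<sigma>_finite]) (use b4_upper \<sigma>_sets in \<open>auto simp: measurable_cong_sets[OF \<sigma>_sets refl]\<close>)

interpretation LS: pair_sigma_finite lborel \<sigma>
  by (intro pair_sigma_finite.intro lborel.sigma_finite_measure_axioms \<sigma>F.sigma_finite_measure_axioms)

lemma f_prod_set: "{p \<in> space (lborel \<Otimes>\<^sub>M \<sigma>). \<bar>f (snd p) (fst p)\<bar> \<le> 1} \<in> sets (lborel \<Otimes>\<^sub>M \<sigma>)"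
  by measurable

lemma f_prod_bnd: "AE p in lborel \<Otimes>\<^sub>M \<sigma>. \<bar>f (snd p) (fst p)\<bar> \<le> 1"
  by (rule LS.AE_pair_measure[OF f_prod_set]) (auto intro: f_t_bnd)

lemma f_x_bnd: "AE x in \<sigma>. AE t in lborel. \<bar>f x t\<bar> \<le> 1"
proof -
  have "AE t in lborel. AE x in \<sigma>. \<bar>f x t\<bar> \<le> 1" using f_t_bnd by auto
  then show ?thesis using LS.AE_commute[of "\<lambda>t x. \<bar>f x t\<bar> \<le> 1"] f_prod_set by simp
qed

lemma sig_meas[measurable]: "\<phi> \<in> borel_measurable \<sigma>" "lamb \<in> borel_measurable \<sigma>" "lo \<in> borel_measurable \<sigma>"
   "up \<in> borel_measurable \<sigma>"
  by (simp_all add: measurable_cong_sets[OF \<sigma>_sets refl])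

lemma space_\<sigma>: "space \<sigma> = UNIV"
  using sets_eq_imp_space_eq[OF \<sigma>_sets] by simp

lemma f_\<sigma>l[measurable]: "(\<lambda>p. f (fst p) (snd p)) \<in> borel_measurable (\<sigma> \<Otimes>\<^sub>M lborel)"
  using f_borel by (subst measurable_cong_sets[OF sets_pair_measure_cong[OF \<sigma>_sets sets_lborel] refl])

lemma f_x_lborel[measurable]: "(\<lambda>t. f x t) \<in> borel_measurable lborel"
proof -
  have "(\<lambda>t. (x, t)) \<in> lborel \<rightarrow>\<^sub>M borel \<Otimes>\<^sub>M lborel" by measurable
  from measurable_compose[OF this f_bl] show ?thesis by simp
qed

definition "w x t = (1 - lamb x) * hind (lo x) t + lamb x * hind (up x) t"
definition "gs t x = \<phi> x * w x t * f x t"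
definition "J\<sigma> t = (\<integral>x. gs t x \<partial>\<sigma>)"

lemma w_bnd: "\<bar>w x t\<bar> \<le> indicator {-Mu..Mu} t"
proof -
  have "\<bar>w x t\<bar> \<le> (1 - lamb x) * \<bar>hind (lo x) t\<bar> + lamb x * \<bar>hind (up x) t\<bar>"
    unfolding w_def using lamb_range[of x] by (auto simp: abs_mult intro!: order.trans[OF abs_triangle_ineq])
  also have "\<dots> \<le> (1 - lamb x) * indicator {-Mu..Mu} t + lamb x * indicator {-Mu..Mu} t"
    using lamb_range[of x] hind_bound[OF lo_bnd, of x t] hind_bound[OF up_bnd, of x t]
    by (intro add_mono mult_left_mono) auto
  finally show ?thesis by (simp add: algebra_simps)
qed

lemma gs_meas[measurable]: "(\<lambda>p. gs (fst p) (snd p)) \<in> borel_measurable (lborel \<Otimes>\<^sub>M \<sigma>)"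
  unfolding gs_def w_def by measurable

lemma gs_int: "integrable (lborel \<Otimes>\<^sub>M \<sigma>) (\<lambda>p. gs (fst p) (snd p))"
proof (rule Bochner_Integration.integrable_bound)
  have "emeasure (lborel \<Otimes>\<^sub>M \<sigma>) ({-Mu..Mu} \<times> space \<sigma>) = emeasure lborel {-Mu..Mu} * emeasure \<sigma> (space \<sigma>)"
    by (rule \<sigma>F.emeasure_pair_measure_Times) auto
  also have "\<dots> < \<infinity>"
  proof -
    have "emeasure \<sigma> (space \<sigma>) < top" using \<sigma>F.emeasure_finite less_top by blast
    then show ?thesis by (simp add: ennreal_mult_less_top emeasure_lborel_Icc_eq)
  qed
  finally have fin: "emeasure (lborel \<Otimes>\<^sub>M \<sigma>) ({-Mu..Mu} \<times> space \<sigma>) < \<infinity>" .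
  show "integrable (lborel \<Otimes>\<^sub>M \<sigma>) (\<lambda>p. \<bar>C\<phi>\<bar> * indicator ({-Mu..Mu} \<times> space \<sigma>) p :: real)"
    using fin by (intro integrable_mult_right integrable_real_indicator) auto
  show "AE p in lborel \<Otimes>\<^sub>M \<sigma>. norm (gs (fst p) (snd p)) \<le> norm (\<bar>C\<phi>\<bar> * indicator ({-Mu..Mu} \<times> space \<sigma>) p :: real)"
    using f_prod_bnd
  proof eventually_elim
    fix p :: "real \<times> 'a" assume f1: "\<bar>f (snd p) (fst p)\<bar> \<le> 1"
    have "\<bar>gs (fst p) (snd p)\<bar> = \<bar>\<phi> (snd p)\<bar> * \<bar>w (snd p) (fst p)\<bar> * \<bar>f (snd p) (fst p)\<bar>"
      unfolding gs_def by (simp add: abs_mult)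
    also have "\<dots> \<le> \<bar>C\<phi>\<bar> * indicator {-Mu..Mu} (fst p) * 1"
      using K\<phi>(5)[of "snd p"] w_bnd[of "snd p" "fst p"] f1
      by (intro mult_mono) auto
    finally show "norm (gs (fst p) (snd p)) \<le> norm (\<bar>C\<phi>\<bar> * indicator ({-Mu..Mu} \<times> space \<sigma>) p :: real)"
      using space_\<sigma> by (cases p) (auto simp: indicator_def)
  qed
qed simp

lemma gs_int2: "integrable (lborel \<Otimes>\<^sub>M \<sigma>) (case_prod gs)"
  using gs_int by (simp add: case_prod_beta')

lemma Fint_sgn: "Fint f x s = (\<integral>t. sgnind s t * f x t \<partial>lborel)"
  unfolding Fint_def by (simp add: interval_sgnind)

lemma Fint_meas:
  assumes [measurable]: "g \<in> borel_measurable \<sigma>"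
  shows "(\<lambda>x. Fint f x (g x)) \<in> borel_measurable \<sigma>"
proof -
  have "(\<lambda>x. \<integral>t. sgnind (g x) t * f x t \<partial>lborel) \<in> borel_measurable \<sigma>"
    by (rule lborel.borel_measurable_lebesgue_integral) measurable
  then show ?thesis by (simp add: Fint_sgn)
qed

lemma inner_gs:
  assumes fx: "AE t in lborel. \<bar>f x t\<bar> \<le> 1"
  shows "(\<integral>t. gs t x \<partial>lborel) = \<phi> x * ((1 - lamb x) * Fint f x (lo x) + lamb x * Fint f x (up x))"
proof -
  have i1: "integrable lborel (\<lambda>t. hind (lo x) t * f x t)"
    by (rule hind_integrable[OF f_x_lborel fx lo_bnd])
  have i2: "integrable lborel (\<lambda>t. hind (up x) t * f x t)"
    by (rule hind_integrable[OF f_x_lborel fx up_bnd])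
  have "(\<integral>t. gs t x \<partial>lborel) = (\<integral>t. \<phi> x * ((1 - lamb x) * (hind (lo x) t * f x t) + lamb x * (hind (up x) t * f x t)) \<partial>lborel)"
    unfolding gs_def w_def by (intro Bochner_Integration.integral_cong) (auto simp: algebra_simps)
  also have "\<dots> = \<phi> x * ((1 - lamb x) * (\<integral>t. hind (lo x) t * f x t \<partial>lborel) + lamb x * (\<integral>t. hind (up x) t * f x t \<partial>lborel))"
    using i1 i2 by simp
  also have "\<dots> = \<phi> x * ((1 - lamb x) * Fint f x (lo x) + lamb x * Fint f x (up x))"
    unfolding Fint_def by (simp add: hind_interval[OF f_x_lborel])
  finally show ?thesis .
qed

lemma J\<sigma>_int: "has_bochner_integral lborel J\<sigma>
   (\<integral>x. \<phi> x * ((1 - lam x) * Fint f x (approx_lower \<Omega> u x) + lam x * Fint f x (approx_upper \<Omega> u x)) \<partial>\<sigma>)"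
proof -
  have int: "integrable lborel J\<sigma>" unfolding J\<sigma>_def[abs_def] by (rule LS.integrable_fst[OF gs_int2])
  have "integral\<^sup>L lborel J\<sigma> = integral\<^sup>L (lborel \<Otimes>\<^sub>M \<sigma>) (case_prod gs)"
    unfolding J\<sigma>_def[abs_def] by (rule LS.integral_fst[OF gs_int2])
  also have "\<dots> = (\<integral>x. (\<integral>t. gs t x \<partial>lborel) \<partial>\<sigma>)"
    by (rule LS.integral_snd[OF gs_int2, symmetric])
  also have "\<dots> = (\<integral>x. \<phi> x * ((1 - lamb x) * Fint f x (lo x) + lamb x * Fint f x (up x)) \<partial>\<sigma>)"
  proof (rule integral_cong_AE)
    show "(\<lambda>x. \<integral>t. gs t x \<partial>lborel) \<in> borel_measurable \<sigma>"
      using LS.integrable_snd[OF gs_int2] by (rule borel_measurable_integrable)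
    show "(\<lambda>x. \<phi> x * ((1 - lamb x) * Fint f x (lo x) + lamb x * Fint f x (up x))) \<in> borel_measurable \<sigma>"
      using Fint_meas[of lo] Fint_meas[of up] by measurable
    show "AE x in \<sigma>. (\<integral>t. gs t x \<partial>lborel) = \<phi> x * ((1 - lamb x) * Fint f x (lo x) + lamb x * Fint f x (up x))"
      using f_x_bnd by eventually_elim (rule inner_gs)
  qed
  also have "\<dots> = (\<integral>x. \<phi> x * ((1 - lam x) * Fint f x (approx_lower \<Omega> u x) + lam x * Fint f x (approx_upper \<Omega> u x)) \<partial>\<sigma>)"
    by (intro Bochner_Integration.integral_cong) (auto simp: lamb_def lo_def up_def phi_outside)
  finally show ?thesis using has_bochner_integral_integrable[OF int] by simp
qed

interpretation LL: pair_sigma_finite "lborel :: real measure" "lborel :: 'a measure"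
  by (intro pair_sigma_finite.intro lborel.sigma_finite_measure_axioms)

lemma lb_meas[measurable]: "ub \<in> borel_measurable lborel" "\<phi> \<in> borel_measurable lborel"
  "(\<lambda>x. grad \<phi> x) \<in> borel_measurable lborel"
  by simp_all

definition "Mb' = max Mb 0"

lemma bgrad_bnd: "\<bar>bb x t \<bullet> grad \<phi> x\<bar> \<le> Mb' * G\<phi> * indicator K\<phi> x"
proof (cases "x \<in> K\<phi>")
  case True
  have "\<bar>bb x t \<bullet> grad \<phi> x\<bar> \<le> norm (bb x t) * norm (grad \<phi> x)" by (rule Cauchy_Schwarz_ineq2)
  also have "\<dots> \<le> Mb' * G\<phi>" unfolding Mb'_def using bb_bnd[of x t] K\<phi>(6)[of x]
    by (intro mult_mono) auto
  finally show ?thesis using True by simp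
next
  case False
  then show ?thesis using K\<phi>(4)[of x] by simp
qed

lemma K\<phi>_sets[measurable]: "K\<phi> \<in> sets borel"
  using K\<phi>(1) by (simp add: compact_imp_closed)

lemma K\<phi>_fin: "emeasure lborel K\<phi> < \<infinity>"
  using K\<phi>(1) by (intro emeasure_bounded_finite compact_imp_bounded)

lemma bb_x_lborel[measurable]: "(\<lambda>t. bb x t) \<in> borel_measurable lborel"
proof -
  have "(\<lambda>t. (t, x)) \<in> lborel \<rightarrow>\<^sub>M lborel \<Otimes>\<^sub>M lborel" by measurable
  from measurable_compose[OF this bb_swap] show ?thesis by simp
qed

lemma bb_t_lborel[measurable]: "(\<lambda>x. bb x t) \<in> borel_measurable lborel"
proof -
  have "(\<lambda>x. (t, x)) \<in> lborel \<rightarrow>\<^sub>M lborel \<Otimes>\<^sub>M lborel" by measurable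
  from measurable_compose[OF this bb_swap] show ?thesis by simp
qed

lemma cbg_int:
  assumes c[measurable]: "c \<in> borel_measurable lborel" and cb: "\<And>x. \<bar>c x\<bar> \<le> 1"
  shows "integrable lborel (\<lambda>x. c x * (bb x t \<bullet> grad \<phi> x))"
proof (rule Bochner_Integration.integrable_bound)
  show "integrable lborel (\<lambda>x. Mb' * G\<phi> * indicator K\<phi> x :: real)"
    using K\<phi>_fin by (intro integrable_mult_right integrable_real_indicator) auto
  show "AE x in lborel. norm (c x * (bb x t \<bullet> grad \<phi> x)) \<le> norm (Mb' * G\<phi> * indicator K\<phi> x :: real)"
  proof (intro AE_I2)
    fix x
    have "\<bar>c x * (bb x t \<bullet> grad \<phi> x)\<bar> \<le> 1 * (Mb' * G\<phi> * indicator K\<phi> x)"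
      unfolding abs_mult using cb[of x] bgrad_bnd[of x t] by (intro mult_mono) auto
    then show "norm (c x * (bb x t \<bullet> grad \<phi> x)) \<le> norm (Mb' * G\<phi> * indicator K\<phi> x :: real)"
      by simp
  qed
qed measurable

definition "h t x = indicator \<Omega> x * hind (ub x) t * (bb x t \<bullet> grad \<phi> x)"
definition "Lb t = (\<integral>x. h t x \<partial>lborel)"

lemma h_meas[measurable]: "(\<lambda>p. h (fst p) (snd p)) \<in> borel_measurable (lborel \<Otimes>\<^sub>M lborel)"
  unfolding h_def by measurable

lemma h_int: "integrable (lborel \<Otimes>\<^sub>M lborel) (case_prod h)"
proof (rule Bochner_Integration.integrable_bound)
  have "emeasure (lborel \<Otimes>\<^sub>M lborel) ({-Mu..Mu} \<times> K\<phi>) = emeasure lborel {-Mu..Mu} * emeasure lborel K\<phi>"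
    by (rule lborel.emeasure_pair_measure_Times) auto
  also have "\<dots> < \<infinity>" using K\<phi>_fin by (simp add: ennreal_mult_less_top emeasure_lborel_Icc_eq)
  finally have fin: "emeasure (lborel \<Otimes>\<^sub>M lborel) ({-Mu..Mu} \<times> K\<phi>) < \<infinity>" .
  show "integrable (lborel \<Otimes>\<^sub>M lborel) (\<lambda>p. Mb' * G\<phi> * indicator ({-Mu..Mu} \<times> K\<phi>) p :: real)"
    using fin by (intro integrable_mult_right integrable_real_indicator) auto
  show "case_prod h \<in> borel_measurable (lborel \<Otimes>\<^sub>M lborel)"
    using h_meas by (simp add: case_prod_beta')
  show "AE p in lborel \<Otimes>\<^sub>M lborel. norm (case_prod h p) \<le> norm (Mb' * G\<phi> * indicator ({-Mu..Mu} \<times> K\<phi>) p :: real)"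
  proof (intro AE_I2)
    fix p :: "real \<times> 'a"
    obtain t x where p: "p = (t, x)" by (cases p)
    have "\<bar>h t x\<bar> \<le> 1 * indicator {-Mu..Mu} t * (Mb' * G\<phi> * indicator K\<phi> x)"
      unfolding h_def abs_mult using hind_bound[OF ub_bnd, of x t] bgrad_bnd[of x t]
      by (intro mult_mono) (auto simp: indicator_def)
    moreover have "0 \<le> Mb' * G\<phi>" using bgrad_bnd[of x t] K\<phi>(6)[of x] unfolding Mb'_def
      by (intro mult_nonneg_nonneg) (auto intro: order.trans[OF norm_ge_zero])
    ultimately show "norm (case_prod h p) \<le> norm (Mb' * G\<phi> * indicator ({-Mu..Mu} \<times> K\<phi>) p :: real)"
      unfolding p by (auto simp: indicator_def)
  qed
qed

lemma sgn_bb_int: "integrable lborel (\<lambda>t. sgnind s t *\<^sub>R bb x t)" if "\<bar>s\<bar> \<le> Mu"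
proof (rule Bochner_Integration.integrable_bound)
  show "integrable lborel (\<lambda>t. Mb' * indicator {-Mu..Mu} t :: real)"
    by (intro integrable_mult_right integrable_real_indicator) (auto simp: emeasure_lborel_Icc_eq)
  show "AE t in lborel. norm (sgnind s t *\<^sub>R bb x t) \<le> norm (Mb' * indicator {-Mu..Mu} t :: real)"
  proof (intro AE_I2)
    fix t
    have "norm (sgnind s t *\<^sub>R bb x t) \<le> indicator {-Mu..Mu} t * Mb'"
      unfolding norm_scaleR Mb'_def using sgnind_bound[OF that, of t] bb_bnd[of x t]
      by (intro mult_mono) auto
    then show "norm (sgnind s t *\<^sub>R bb x t) \<le> norm (Mb' * indicator {-Mu..Mu} t :: real)"
      unfolding Mb'_def by (auto simp: indicator_def)
  qed
qed measurable

lemma inner_h: "(\<integral>t. h t x \<partial>lborel) = indicator \<Omega> x * (Bint b x (ub x) \<bullet> grad \<phi> x)"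
proof (cases "x \<in> \<Omega>")
  case False
  then show ?thesis by (simp add: h_def)
next
  case True
  define c where "c = grad \<phi> x"
  have "(\<integral>t. h t x \<partial>lborel) = (\<integral>t. hind (ub x) t * (bb x t \<bullet> c) \<partial>lborel)"
    using True by (simp add: h_def c_def)
  also have "\<dots> = interval_lebesgue_integral lborel (ereal 0) (ereal (ub x)) (\<lambda>t. bb x t \<bullet> c)"
    by (rule hind_interval) measurable
  also have "\<dots> = (\<integral>t. sgnind (ub x) t *\<^sub>R (bb x t \<bullet> c) \<partial>lborel)"
    by (rule interval_sgnind)
  also have "\<dots> = (\<integral>t. (sgnind (ub x) t *\<^sub>R bb x t) \<bullet> c \<partial>lborel)"
    by simp
  also have "\<dots> = (\<integral>t. sgnind (ub x) t *\<^sub>R bb x t \<partial>lborel) \<bullet> c"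
    using sgn_bb_int[OF ub_bnd] by (rule integral_inner_left)
  also have "\<dots> = interval_lebesgue_integral lborel (ereal 0) (ereal (ub x)) (bb x) \<bullet> c"
    by (simp add: interval_sgnind)
  also have "bb x = b x" using True by (auto simp: bb_def)
  finally show ?thesis using True by (simp add: Bint_def c_def)
qed

lemma Lb_int: "has_bochner_integral lborel Lb (LINT x:\<Omega>|lebesgue. Bint b x (u x) \<bullet> grad \<phi> x)"
proof -
  define F where "F x = indicator \<Omega> x * (Bint b x (ub x) \<bullet> grad \<phi> x)" for x
  have int: "integrable lborel Lb" unfolding Lb_def[abs_def] by (rule lborel_pair.integrable_fst[OF h_int])
  have Fm: "F \<in> borel_measurable lborel"
  proof -
    have "(\<lambda>x. \<integral>t. h t x \<partial>lborel) \<in> borel_measurable lborel"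
      using lborel_pair.integrable_snd[OF h_int] by (rule borel_measurable_integrable)
    also have "(\<lambda>x. \<integral>t. h t x \<partial>lborel) = F" by (rule ext) (simp add: inner_h F_def)
    finally show ?thesis .
  qed
  have "integral\<^sup>L lborel Lb = integral\<^sup>L (lborel \<Otimes>\<^sub>M lborel) (case_prod h)"
    unfolding Lb_def[abs_def] by (rule lborel_pair.integral_fst[OF h_int])
  also have "\<dots> = (\<integral>x. (\<integral>t. h t x \<partial>lborel) \<partial>lborel)"
    by (rule lborel_pair.integral_snd[OF h_int, symmetric])
  also have "\<dots> = (\<integral>x. F x \<partial>lborel)" by (simp add: inner_h F_def)
  also have "\<dots> = (\<integral>x. F x \<partial>lebesgue)" by (rule integral_completion[OF Fm, symmetric])
  also have "\<dots> = (\<integral>x. indicator \<Omega> x *\<^sub>R (Bint b x (u x) \<bullet> grad \<phi> x) \<partial>lebesgue)"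
  proof (rule integral_cong_AE)
    have ae: "AE x in lborel. indicator \<Omega> x *\<^sub>R (Bint b x (u x) \<bullet> grad \<phi> x) = F x"
      using u_ub[unfolded AE_completion_iff] by eventually_elim (auto simp: F_def)
    show "F \<in> borel_measurable lebesgue" using Fm by (rule measurable_completion)
    show "(\<lambda>x. indicator \<Omega> x *\<^sub>R (Bint b x (u x) \<bullet> grad \<phi> x)) \<in> borel_measurable lebesgue"
      by (rule AE_meas_completion[OF Fm ae])
    show "AE x in lebesgue. F x = indicator \<Omega> x *\<^sub>R (Bint b x (u x) \<bullet> grad \<phi> x)"
      using AE_completion[OF ae] by eventually_elim simp
  qed
  also have "\<dots> = (LINT x:\<Omega>|lebesgue. Bint b x (u x) \<bullet> grad \<phi> x)"
    by (simp add: set_lebesgue_integral_def)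
  finally show ?thesis using has_bochner_integral_integrable[OF int] by simp
qed

lemma PA: "(LINT x:\<Omega>|lebesgue. (indicator {y\<in>\<Omega>. t < u y} x *\<^sub>R b x t) \<bullet> grad \<phi> x)
   = Lb t + (if t < 0 then 1 else 0) * (LINT x:\<Omega>|lebesgue. b x t \<bullet> grad \<phi> x)"
proof -
  define c1 where "c1 x = indicator \<Omega> x * (if t < ub x then 1 else 0 :: real)" for x
  define c0 where "c0 x = (indicator \<Omega> x :: real)" for x
  have c1m[measurable]: "c1 \<in> borel_measurable lborel" unfolding c1_def[abs_def] by measurable
  have c0m[measurable]: "c0 \<in> borel_measurable lborel" unfolding c0_def[abs_def] by measurable
  have i1: "integrable lborel (\<lambda>x. c1 x * (bb x t \<bullet> grad \<phi> x))"
    by (rule cbg_int[OF c1m]) (auto simp: c1_def)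
  have i0: "integrable lborel (\<lambda>x. c0 x * (bb x t \<bullet> grad \<phi> x))"
    by (rule cbg_int[OF c0m]) (auto simp: c0_def)
  have G1m: "(\<lambda>x. c1 x * (bb x t \<bullet> grad \<phi> x)) \<in> borel_measurable lborel" by measurable
  have ae: "AE x in lborel. indicator \<Omega> x *\<^sub>R ((indicator {y\<in>\<Omega>. t < u y} x *\<^sub>R b x t) \<bullet> grad \<phi> x)
      = c1 x * (bb x t \<bullet> grad \<phi> x)"
    using u_ub[unfolded AE_completion_iff] by eventually_elim (auto simp: c1_def bb_def indicator_def)
  have "(LINT x:\<Omega>|lebesgue. (indicator {y\<in>\<Omega>. t < u y} x *\<^sub>R b x t) \<bullet> grad \<phi> x)
      = (\<integral>x. indicator \<Omega> x *\<^sub>R ((indicator {y\<in>\<Omega>. t < u y} x *\<^sub>R b x t) \<bullet> grad \<phi> x) \<partial>lebesgue)"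
    by (simp add: set_lebesgue_integral_def)
  also have "\<dots> = (\<integral>x. c1 x * (bb x t \<bullet> grad \<phi> x) \<partial>lebesgue)"
    by (rule integral_cong_AE[OF AE_meas_completion[OF G1m ae] measurable_completion[OF G1m] AE_completion[OF ae]])
  also have "\<dots> = (\<integral>x. c1 x * (bb x t \<bullet> grad \<phi> x) \<partial>lborel)"
    by (rule integral_completion[OF G1m])
  finally have L1: "(LINT x:\<Omega>|lebesgue. (indicator {y\<in>\<Omega>. t < u y} x *\<^sub>R b x t) \<bullet> grad \<phi> x)
      = (\<integral>x. c1 x * (bb x t \<bullet> grad \<phi> x) \<partial>lborel)" .
  have G0m: "(\<lambda>x. c0 x * (bb x t \<bullet> grad \<phi> x)) \<in> borel_measurable lborel" by measurable
  have "(LINT x:\<Omega>|lebesgue. b x t \<bullet> grad \<phi> x) = (\<integral>x. c0 x * (bb x t \<bullet> grad \<phi> x) \<partial>lebesgue)"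
    unfolding set_lebesgue_integral_def
    by (intro Bochner_Integration.integral_cong) (auto simp: c0_def bb_def indicator_def)
  also have "\<dots> = (\<integral>x. c0 x * (bb x t \<bullet> grad \<phi> x) \<partial>lborel)"
    by (rule integral_completion[OF G0m])
  finally have L0: "(LINT x:\<Omega>|lebesgue. b x t \<bullet> grad \<phi> x) = (\<integral>x. c0 x * (bb x t \<bullet> grad \<phi> x) \<partial>lborel)" .
  have "Lb t = (\<integral>x. c1 x * (bb x t \<bullet> grad \<phi> x) - (if t < 0 then 1 else 0) * (c0 x * (bb x t \<bullet> grad \<phi> x)) \<partial>lborel)"
    unfolding Lb_def h_def
    by (intro Bochner_Integration.integral_cong) (auto simp: c1_def c0_def hind_def algebra_simps)
  also have "\<dots> = (\<integral>x. c1 x * (bb x t \<bullet> grad \<phi> x) \<partial>lborel) - (if t < 0 then 1 else 0) * (\<integral>x. c0 x * (bb x t \<bullet> grad \<phi> x) \<partial>lborel)"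
    using i1 i0 by simp
  finally show ?thesis using L1 L0 by simp
qed

definition "Csig = {t. measure (distr \<sigma> borel lo) {t} \<noteq> 0} \<union> {t. measure (distr \<sigma> borel up) {t} \<noteq> 0}"

lemma Csig_countable: "countable Csig"
proof -
  interpret Dl: finite_measure "distr \<sigma> borel lo" by (rule \<sigma>F.finite_measure_distr) simp
  interpret Du: finite_measure "distr \<sigma> borel up" by (rule \<sigma>F.finite_measure_distr) simp
  show ?thesis unfolding Csig_def using Dl.countable_support Du.countable_support by simp
qed

lemma AE_not_val:
  fixes g :: "'a \<Rightarrow> real"
  assumes g[measurable]: "g \<in> borel_measurable borel" and t: "measure (distr \<sigma> borel g) {t} = 0"
  shows "AE x in \<sigma>. g x \<noteq> t"
proof -
  have gm: "g \<in> borel_measurable \<sigma>" by (simp add: measurable_cong_sets[OF \<sigma>_sets refl])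
  have N: "g -` {t} \<inter> space \<sigma> \<in> sets \<sigma>" by (rule measurable_sets[OF gm]) (simp add: borel_closed)
  have "measure \<sigma> (g -` {t} \<inter> space \<sigma>) = 0" using t by (simp add: measure_distr gm)
  then have "g -` {t} \<inter> space \<sigma> \<in> null_sets \<sigma>" using N by (simp add: \<sigma>F.emeasure_eq_measure null_sets_def)
  then show ?thesis by (rule AE_I') auto
qed

lemma w_le1: "\<bar>w x t\<bar> \<le> 1"
  by (rule order.trans[OF w_bnd]) (simp add: indicator_def)

lemma f_t_\<sigma>[measurable]: "(\<lambda>x. f x t) \<in> borel_measurable \<sigma>"
  by (simp add: measurable_cong_sets[OF \<sigma>_sets refl])

lemma gs_t_int: "integrable \<sigma> (\<lambda>x. gs t x)"
proof (rule \<sigma>F.integrable_const_bound)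
  show "AE x in \<sigma>. norm (gs t x) \<le> \<bar>C\<phi>\<bar>"
    using f_t_bnd[of t]
  proof eventually_elim
    fix x assume f1: "\<bar>f x t\<bar> \<le> 1"
    have "\<bar>gs t x\<bar> = \<bar>\<phi> x\<bar> * \<bar>w x t\<bar> * \<bar>f x t\<bar>" unfolding gs_def by (simp add: abs_mult)
    also have "\<dots> \<le> \<bar>C\<phi>\<bar> * 1 * 1"
      using K\<phi>(5)[of x] w_le1[of x t] f1 by (intro mult_mono) auto
    finally show "norm (gs t x) \<le> \<bar>C\<phi>\<bar>" by simp
  qed
  show "(\<lambda>x. gs t x) \<in> borel_measurable \<sigma>"
    unfolding gs_def w_def by (simp add: measurable_cong_sets[OF \<sigma>_sets refl])
qed

lemma pf_t_int: "integrable \<sigma> (\<lambda>x. \<phi> x * f x t)"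
proof (rule \<sigma>F.integrable_const_bound)
  show "AE x in \<sigma>. norm (\<phi> x * f x t) \<le> \<bar>C\<phi>\<bar>"
    using f_t_bnd[of t]
  proof eventually_elim
    fix x assume f1: "\<bar>f x t\<bar> \<le> 1"
    have "\<bar>\<phi> x * f x t\<bar> \<le> \<bar>C\<phi>\<bar> * 1"
      unfolding abs_mult using K\<phi>(5)[of x] f1 by (intro mult_mono) auto
    then show "norm (\<phi> x * f x t) \<le> \<bar>C\<phi>\<bar>" by simp
  qed
  show "(\<lambda>x. \<phi> x * f x t) \<in> borel_measurable \<sigma>"
    by (simp add: measurable_cong_sets[OF \<sigma>_sets refl])
qed

lemma PB:
  assumes t: "t \<notin> Csig"
  shows "(\<integral>x. \<phi> x * lam_rep \<Omega> lam (indicator {y\<in>\<Omega>. t < u y}) x * f x t \<partial>\<sigma>)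
    = J\<sigma> t + (if t < 0 then 1 else 0) * (\<integral>x. \<phi> x * f x t \<partial>\<sigma>)"
proof -
  define E where "E = {y\<in>\<Omega>. t < u y}"
  have sle: "{y\<in>\<Omega>. u y \<le> t} \<in> sets lebesgue" by (rule sets_le[OF open_\<Omega> umeas ubnd])
  have sgt: "E \<in> sets lebesgue" unfolding E_def by (rule sets_gt[OF open_\<Omega> umeas ubnd])
  have D1[measurable]: "Measurable.pred \<sigma> (D0 {y\<in>\<Omega>. u y \<le> t})"
    using D0_meas[OF sle] by (simp add: measurable_cong_sets[OF \<sigma>_sets refl])
  have D2[measurable]: "Measurable.pred \<sigma> (D0 E)"
    using D0_meas[OF sgt] by (simp add: measurable_cong_sets[OF \<sigma>_sets refl])
  define R where "R x = (1 - lamb x) * (if D0 {y\<in>\<Omega>. u y \<le> t} x then 1 else 0) + lamb x * (if D0 E x then 0 else 1)" for x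
  have Rm: "(\<lambda>x. \<phi> x * R x * f x t) \<in> borel_measurable \<sigma>"
    unfolding R_def by measurable
  have eq1: "\<phi> x * lam_rep \<Omega> lam (indicator E) x * f x t = \<phi> x * R x * f x t" for x
  proof (cases "x \<in> \<Omega>")
    case True
    have "\<Omega> - E = {y\<in>\<Omega>. u y \<le> t}" unfolding E_def by auto
    then show ?thesis unfolding lam_rep_def R_def
      using True vplus[OF open_\<Omega> True, of E] vminus[OF open_\<Omega> True, of E]
      by (auto simp: E_def lamb_def)
  qed (simp add: phi_outside)
  have m1: "measure (distr \<sigma> borel lo) {t} = 0" "measure (distr \<sigma> borel up) {t} = 0"
    using t unfolding Csig_def by auto
  have eq2: "AE x in \<sigma>. \<phi> x * R x * f x t = gs t x + (if t < 0 then 1 else 0) * (\<phi> x * f x t)"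
    using AE_not_val[OF lo_borel m1(1)] AE_not_val[OF up_borel m1(2)]
  proof eventually_elim
    fix x assume lx: "lo x \<noteq> t" and ux: "up x \<noteq> t"
    show "\<phi> x * R x * f x t = gs t x + (if t < 0 then 1 else 0) * (\<phi> x * f x t)"
    proof (cases "x \<in> \<Omega>")
      case True
      have "t < lo x \<or> lo x < t" using lx by auto
      then have d1: "D0 {y\<in>\<Omega>. u y \<le> t} x \<longleftrightarrow> t < lo x"
        using lo_gt_le[OF open_\<Omega> umeas ubnd True, of t] lo_lt_le[OF open_\<Omega> umeas ubnd True, of t] True
        by (auto simp: lo_def)
      have "t < up x \<or> up x < t" using ux by auto
      then have d2: "D0 E x \<longleftrightarrow> \<not> t < up x"
        using up_lt[OF open_\<Omega> umeas ubnd True, of t] up_gt[OF open_\<Omega> umeas ubnd True, of t] True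
        by (auto simp: up_def E_def)
      show ?thesis unfolding R_def gs_def w_def hind_def d1 d2 by (auto simp: algebra_simps)
    qed (simp add: phi_outside gs_def)
  qed
  have "(\<integral>x. \<phi> x * lam_rep \<Omega> lam (indicator E) x * f x t \<partial>\<sigma>) = (\<integral>x. \<phi> x * R x * f x t \<partial>\<sigma>)"
    by (simp add: eq1)
  also have "\<dots> = (\<integral>x. gs t x + (if t < 0 then 1 else 0) * (\<phi> x * f x t) \<partial>\<sigma>)"
  proof (rule integral_cong_AE[OF Rm _ eq2])
    show "(\<lambda>x. gs t x + (if t < 0 then 1 else 0) * (\<phi> x * f x t)) \<in> borel_measurable \<sigma>"
      using gs_t_int[of t] pf_t_int[of t] by (auto intro!: borel_measurable_add borel_measurable_times
        borel_measurable_integrable)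
  qed
  also have "\<dots> = J\<sigma> t + (if t < 0 then 1 else 0) * (\<integral>x. \<phi> x * f x t \<partial>\<sigma>)"
    using gs_t_int[of t] pf_t_int[of t] by (simp add: J\<sigma>_def)
  finally show ?thesis by (simp add: E_def)
qed

lemma main_result:
  "has_bochner_integral lborel
     (\<lambda>t. lin_pairing_int \<Omega> \<sigma> (\<lambda>x. b x t) (\<lambda>x. f x t) (indicator {y\<in>\<Omega>. t < u y}) lam \<phi>)
     (nonlin_pairing_int \<Omega> \<sigma> b f u lam \<phi>)"
proof -
  define I where "I t = lin_pairing_int \<Omega> \<sigma> (\<lambda>x. b x t) (\<lambda>x. f x t) (indicator {y\<in>\<Omega>. t < u y}) lam \<phi>" for t
  have eqI: "I t = - Lb t - J\<sigma> t" if t: "t \<notin> Csig" for t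
  proof -
    have b3: "(LINT x:\<Omega>|lebesgue. b x t \<bullet> grad \<phi> x) = - (\<integral>x. \<phi> x * f x t \<partial>\<sigma>)"
      by (rule b3_div[OF \<phi>])
    show ?thesis unfolding I_def lin_pairing_int_def PA PB[OF t] b3 by (simp add: algebra_simps)
  qed
  have G: "has_bochner_integral lborel (\<lambda>t. - Lb t - J\<sigma> t) (nonlin_pairing_int \<Omega> \<sigma> b f u lam \<phi>)"
  proof -
    have "has_bochner_integral lborel (\<lambda>t. - Lb t - J\<sigma> t)
        (- (LINT x:\<Omega>|lebesgue. Bint b x (u x) \<bullet> grad \<phi> x)
         - (\<integral>x. \<phi> x * ((1 - lam x) * Fint f x (approx_lower \<Omega> u x) + lam x * Fint f x (approx_upper \<Omega> u x)) \<partial>\<sigma>))"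
      by (intro has_bochner_integral_diff has_bochner_integral_minus Lb_int J\<sigma>_int)
    moreover have "\<And>A B::real. - A - B = - B - A" by linarith
    ultimately show ?thesis unfolding nonlin_pairing_int_def by metis
  qed
  have Gm: "(\<lambda>t. - Lb t - J\<sigma> t) \<in> borel_measurable lborel"
    by (rule borel_measurable_has_bochner_integral[OF G])
  have Im: "I \<in> borel_measurable lborel"
    by (rule measurable_discrete_difference[OF Gm Csig_countable]) (auto simp: eqI)
  have ae: "AE t in lborel. - Lb t - J\<sigma> t = I t"
  proof -
    have "AE t in lborel. \<forall>c\<in>Csig. t \<noteq> c"
      using Csig_countable by (subst AE_ball_countable) (auto intro: AE_lborel_singleton)
    then show ?thesis by eventually_elim (auto simp: eqI)
  qed
  have "has_bochner_integral lborel I (nonlin_pairing_int \<Omega> \<sigma> b f u lam \<phi>)"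
    using has_bochner_integral_cong_AE[OF Gm Im ae] G by simp
  then show ?thesis unfolding I_def .
qed

end

theorem theorem5p1:
  fixes \<Omega> :: "'a::euclidean_space set" and b :: "'a \<Rightarrow> real \<Rightarrow> 'a"
    and \<sigma> :: "'a measure" and f :: "'a \<Rightarrow> real \<Rightarrow> real"
    and u lam \<phi> :: "'a \<Rightarrow> real"
  assumes dim: "DIM('a) \<ge> 2" and open_\<Omega>: "open \<Omega>"
    and b1_meas: "(\<lambda>p. b (fst p) (snd p)) \<in> borel_measurable (restrict_space borel (\<Omega> \<times> UNIV))"
    and b1_bdd: "\<exists>M. \<forall>x\<in>\<Omega>. \<forall>t. norm (b x t) \<le> M"
    and b2: "AE x in lebesgue. x \<in> \<Omega> \<longrightarrow> continuous_on UNIV (b x)"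
    and \<sigma>_sets: "sets \<sigma> = sets borel" and \<sigma>_finite: "finite_measure \<sigma>"
    and \<sigma>_on_\<Omega>: "emeasure \<sigma> (UNIV - \<Omega>) = 0"
    and f_meas: "(\<lambda>p. f (fst p) (snd p)) \<in> borel_measurable borel"
    and b3_div: "\<And>t \<psi>. C1c \<Omega> \<psi> \<Longrightarrow>
        (LINT x:\<Omega>|lebesgue. b x t \<bullet> grad \<psi> x) = - (\<integral>x. \<psi> x * f x t \<partial>\<sigma>)"
    and b4_upper: "\<And>t A. A \<in> sets borel \<Longrightarrow>
        emeasure (density \<sigma> (\<lambda>x. ennreal \<bar>f x t\<bar>)) A \<le> emeasure \<sigma> A"
    and b4_least: "\<And>\<nu>. sets \<nu> = sets borel \<Longrightarrow> finite_measure \<nu> \<Longrightarrow>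
        emeasure \<nu> (UNIV - \<Omega>) = 0 \<Longrightarrow>
        (\<forall>t. \<forall>A\<in>sets borel. emeasure (density \<sigma> (\<lambda>x. ennreal \<bar>f x t\<bar>)) A \<le> emeasure \<nu> A) \<Longrightarrow>
        (\<forall>A\<in>sets borel. emeasure \<sigma> A \<le> emeasure \<nu> A)"
    and u_BV: "BV \<Omega> u" and u_Linf: "Linf \<Omega> u"
    and lam_meas: "lam \<in> borel_measurable (restrict_space borel \<Omega>)"
    and lam_range: "\<forall>x\<in>\<Omega>. 0 \<le> lam x \<and> lam x \<le> 1"
    and \<phi>: "C1c \<Omega> \<phi>"
  shows "has_bochner_integral lborel
           (\<lambda>t. lin_pairing_int \<Omega> \<sigma> (\<lambda>x. b x t) (\<lambda>x. f x t)
                   (indicator {y\<in>\<Omega>. t < u y}) lam \<phi>)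
           (nonlin_pairing_int \<Omega> \<sigma> b f u lam \<phi>)"
  by (rule main_result[OF open_\<Omega> b1_meas b1_bdd \<sigma>_sets \<sigma>_finite f_meas b3_div b4_upper u_BV u_Linf
        lam_meas lam_range \<phi>])


end
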